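(* Let $H$ be a nonlocal vertex bialgebra, $U$ a nonlocal vertex (left) $H$-module-algebra, and $V$ a nonlocal vertex (left) $H$-comodule-algebra with coaction $\rho$. Define a linear map $R(x):V\otimes U\to U\otimes V\otimes\mathbb C((x))$ by $$R(x)(v\otimes u)=\sum_i Y(h_i,-x)u\otimes v_i\quad\text{where }\rho(v)=\sum_i h_i\otimes v_i .$$ Then $R(x)$ is a twisting operator for the pair $(U,V)$, and the smash product $U\sharp V$ coincides with the twisted tensor product $U\otimes_RV$ (same underlying space, vacuum and vertex operator map).
   Context: All vector spaces are over $\mathbb{C}$. A nonlocal vertex algebra is a vector space $V$ with a linear map $Y(\cdot,x):V\to \mathrm{Hom}(V,V((x)))$, $v\mapsto Y(v,x)=\sum_{n\in\mathbb Z}v_nx^{-n-1}$, and a vector $\mathbf 1\in V$ such that for all $v$: $Y(\mathbf 1,x)v=v$, $Y(v,x)\mathbf 1\in V[[x]]$, $\lim_{x\to0}Y(v,x)\mathbf 1=v$; and for all $u,v,w$ there is $k\ge0$ with $(x_0+x_2)^kY(u,x_0+x_2)Y(v,x_2)w=(x_0+x_2)^kY(Y(u,x_0)v,x_2)w$. Write $Y(x)(u\otimes v)=Y(u,x)v$. A module over a nonlocal vertex algebra $H$ is a vector space $W$ with $Y_W(\cdot,x):H\to\mathrm{Hom}(W,W((x)))$, $Y_W(\mathbf 1,x)=1_W$, and for $a,b\in H$, $w\in W$ some $l\ge0$ with $(x_0+x_2)^lY_W(a,x_0+x_2)Y_W(b,x_2)w=(x_0+x_2)^lY_W(Y(a,x_0)b,x_2)w$.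 Conventions: $f(x_1\pm x_2)$ for $f\in\mathbb C((x))$ is expanded in nonnegative powers of the second variable; $T^{ij}$ denotes $T$ acting on tensor factors $i,j$; maps are extended linearly over scalar series. A nonlocal vertex bialgebra is a nonlocal vertex algebra $H$ with a coalgebra structure $(\Delta,\varepsilon)$ such that $\varepsilon(\mathbf 1)=1$, $\varepsilon(Y(h,x)h')=\varepsilon(h)\varepsilon(h')$, $\Delta(\mathbf 1)=\mathbf 1\otimes\mathbf 1$, $\Delta(Y(h,x)h')=Y(\Delta(h),x)\Delta(h')$ (tensor product structure on $H\otimes H$). Write $\Delta(h)=\sum h^{(1)}\otimes h^{(2)}$. A nonlocal vertex $H$-module-algebra is a nonlocal vertex algebra $U$ with an $H$-module structure (vertex operators $Y(h,x)$) such that for $h\in H$, $u,u'\in U$: $Y(h,x)u\in U\otimes\mathbb C((x))$ (a finite sum), $Y(h,x)\mathbf 1=\varepsilon(h)\mathbf 1$, and $Y(h,x)Y(u,z)u'=\sum Y(Y(h^{(1)},x-z)u,z)Y(h^{(2)},x)u'$. A nonlocal vertex $H$-comodule-algebra is a nonlocal vertex algebra $V$ with $\rho:V\to H\otimes V$ making $V$ a left $H$-comodule ($(1\otimes\rho)\rho=(\Delta\otimes1)\rho$, $(\varepsilon\otimes1)\rho(v)=1\otimes v$) such that $\rho(\mathbf 1)=\mathbf 1\otimes\mathbf 1$ and $\rho(Y(v,x)v')=\sum_{i,j}Y(h_i,x)h'_j\otimes Y(v_i,x)v'_j$ whenever $\rho(v)=\sum_i h_i\otimes v_i$, $\rho(v')=\sum_j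 h'_j\otimes v'_j$. Smash product $U\sharp V$: the nonlocal vertex algebra on $U\otimes V$ with vacuum $\mathbf 1\otimes\mathbf 1$ and $Y_\sharp(u\otimes v,x)(u'\otimes v')=\sum_i Y(u,x)Y(h_i,x)u'\otimes Y(v_i,x)v'$ where $\rho(v)=\sum_ih_i\otimes v_i$. Twisting operator for $(U,V)$: a linear map $R(x):V\otimes U\to U\otimes V\otimes\mathbb C((x))$ such that $R(x)(v\otimes\mathbf 1)=\mathbf 1\otimes v$, $R(x)(\mathbf 1\otimes u)=u\otimes\mathbf 1$, $R(x_1)(1\otimes Y(x_2))=(Y(x_2)\otimes1)R^{23}(x_1)R^{12}(x_1+x_2)$ on $V\otimes U\otimes U$, and $R(x_1)(Y(x_2)\otimes 1)=(1\otimes Y(x_2))R^{12}(x_1-x_2)R^{23}(x_1)$ on $V\otimes V\otimes U$. Twisted tensor product $U\otimes_RV$: the space $U\otimes V$ with vacuum $\mathbf 1\otimes\mathbf 1$ and $Y_R(u\otimes v,x)(u'\otimes v')=\sum_j f_j(-x)Y(u,x)u'_j\otimes Y(v_j,x)v'$ where $R(x)(v\otimes u')=\sum_j u'_j\otimes v_j\otimes f_j(x)$. *)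

theory Defs
  imports Complex_Main "HOL-Library.Poly_Mapping" "HOL-Library.Groups_Big_Fun"
begin

section \<open>Vector spaces over C, modelled as free spaces on a basis type\<close>

type_synonym 'a vec = "'a \<Rightarrow>\<^sub>0 complex"

definition sc :: "complex \<Rightarrow> 'a vec \<Rightarrow> 'a vec" where
  "sc c v = Poly_Mapping.map (\<lambda>z. c * z) v"

definition bas :: "'a \<Rightarrow> 'a vec" where
  "bas a = Poly_Mapping.single a 1"

definition lmap :: "('a \<Rightarrow> 'b vec) \<Rightarrow> 'a vec \<Rightarrow> 'b vec" where
  "lmap f t = (\<Sum>a\<in>Poly_Mapping.keys t. sc (Poly_Mapping.lookup t a) (f a))"

definition lmap2 :: "('a \<Rightarrow> 'b \<Rightarrow> 'c vec) \<Rightarrow> 'a vec \<Rightarrow> 'b vec \<Rightarrow> 'c vec" where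
  "lmap2 f s t = lmap (\<lambda>a. lmap (\<lambda>b. f a b) t) s"

text \<open>tensor product: the tensor product of the free spaces on 'a and 'b is the free space on 'a \<times> 'b\<close>
definition tens :: "'a vec \<Rightarrow> 'b vec \<Rightarrow> ('a \<times> 'b) vec" where
  "tens u v = (\<Sum>a\<in>Poly_Mapping.keys u. \<Sum>b\<in>Poly_Mapping.keys v. sc (Poly_Mapping.lookup u a * Poly_Mapping.lookup v b) (bas (a, b)))"

definition rassoc :: "(('a \<times> 'b) \<times> 'c) vec \<Rightarrow> ('a \<times> ('b \<times> 'c)) vec" where
  "rassoc t = lmap (\<lambda>((a, b), c). bas (a, (b, c))) t"

definition lin :: "('a vec \<Rightarrow> 'b vec) \<Rightarrow> bool" where
  "lin f \<longleftrightarrow> (\<forall>a b c. f (a + b) = f a + f b \<and> f (sc c a) = sc c (f a))"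

definition linfun :: "('a vec \<Rightarrow> complex) \<Rightarrow> bool" where
  "linfun f \<longleftrightarrow> (\<forall>a b c. f (a + b) = f a + f b \<and> f (sc c a) = c * f a)"

text \<open>a series-valued map (coefficientwise), indexed by the exponents 'i\<close>
definition linS :: "('a vec \<Rightarrow> 'i \<Rightarrow> 'b vec) \<Rightarrow> bool" where
  "linS f \<longleftrightarrow> (\<forall>i. lin (\<lambda>a. f a i))"

definition bilin :: "('a vec \<Rightarrow> 'b vec \<Rightarrow> 'i \<Rightarrow> 'c vec) \<Rightarrow> bool" where
  "bilin Y \<longleftrightarrow> (\<forall>v. linS (\<lambda>u. Y u v)) \<and> (\<forall>u. linS (Y u))"

text \<open>A one-variable series F :: int \<Rightarrow> _ stands for \<Sum>n F n x^n.
  It is a Laurent series (in W((x))) iff its support is bounded below.\<close>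
definition laurent :: "(int \<Rightarrow> 'b::zero) \<Rightarrow> bool" where
  "laurent F \<longleftrightarrow> (\<exists>N. \<forall>n<N. F n = 0)"

text \<open>F lies in W \<otimes> C((x)) (a finite sum of vectors times scalar Laurent series)\<close>
definition fin_laurent :: "(int \<Rightarrow> 'b vec) \<Rightarrow> bool" where
  "fin_laurent F \<longleftrightarrow> (\<exists>(ws :: 'b vec list) (fs :: (int \<Rightarrow> complex) list).
      length fs = length ws \<and> (\<forall>f\<in>set fs. laurent f) \<and>
      (\<forall>n. F n = (\<Sum>i<length ws. sc ((fs ! i) n) (ws ! i))))"

definition delta0 :: "'b vec \<Rightarrow> int \<Rightarrow> 'b vec" where
  "delta0 w n = (if n = 0 then w else 0)"

text \<open>Two-variable series G :: int \<Rightarrow> int \<Rightarrow> _ stand for \<Sum>i j G i j x1^i x2^j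
  (resp. x0^i x2^j).\<close>

text \<open>multiplication by (x0 + x2)^k\<close>
definition mulpow :: "nat \<Rightarrow> (int \<Rightarrow> int \<Rightarrow> 'b vec) \<Rightarrow> int \<Rightarrow> int \<Rightarrow> 'b vec" where
  "mulpow k G i j = (\<Sum>l\<le>k. sc (of_nat (k choose l)) (G (i - int l) (j - int (k - l))))"

text \<open>Y1(u, x0 + x2) Y2(v, x2) w, with (x0+x2)^n expanded in nonnegative powers of x2\<close>
definition assoc_lhs :: "('a vec \<Rightarrow> 'b vec \<Rightarrow> int \<Rightarrow> 'b vec) \<Rightarrow> ('a vec \<Rightarrow> 'b vec \<Rightarrow> int \<Rightarrow> 'b vec)
     \<Rightarrow> 'a vec \<Rightarrow> 'a vec \<Rightarrow> 'b vec \<Rightarrow> int \<Rightarrow> int \<Rightarrow> 'b vec" where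
  "assoc_lhs Y1 Y2 u v w i j =
     Sum_any (\<lambda>k::nat. sc (of_int (i + int k) gchoose k) (Y1 u (Y2 v w (j - int k)) (i + int k)))"

text \<open>YW(YA(u, x0) v, x2) w\<close>
definition assoc_rhs :: "('a vec \<Rightarrow> 'a vec \<Rightarrow> int \<Rightarrow> 'a vec) \<Rightarrow> ('a vec \<Rightarrow> 'b vec \<Rightarrow> int \<Rightarrow> 'b vec)
     \<Rightarrow> 'a vec \<Rightarrow> 'a vec \<Rightarrow> 'b vec \<Rightarrow> int \<Rightarrow> int \<Rightarrow> 'b vec" where
  "assoc_rhs YA YW u v w i j = YW (YA u v i) w j"

text \<open>Y u v n is the coefficient of x^n in Y(u,x)v (i.e. u_{-n-1} v)\<close>
definition nonlocal_va :: "'a vec \<Rightarrow> ('a vec \<Rightarrow> 'a vec \<Rightarrow> int \<Rightarrow> 'a vec) \<Rightarrow> bool" where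
  "nonlocal_va vac Y \<longleftrightarrow>
     bilin Y \<and> (\<forall>u v. laurent (Y u v)) \<and>
     (\<forall>v. Y vac v = delta0 v) \<and>
     (\<forall>v. (\<forall>n<0. Y v vac n = 0) \<and> Y v vac 0 = v) \<and>
     (\<forall>u v w. \<exists>k. mulpow k (assoc_lhs Y Y u v w) = mulpow k (assoc_rhs Y Y u v w))"

definition nva_module :: "'a vec \<Rightarrow> ('a vec \<Rightarrow> 'a vec \<Rightarrow> int \<Rightarrow> 'a vec)
     \<Rightarrow> ('a vec \<Rightarrow> 'b vec \<Rightarrow> int \<Rightarrow> 'b vec) \<Rightarrow> bool" where
  "nva_module vac Y YW \<longleftrightarrow>
     bilin YW \<and> (\<forall>a w. laurent (YW a w)) \<and>
     (\<forall>w. YW vac w = delta0 w) \<and>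
     (\<forall>a b w. \<exists>l. mulpow l (assoc_lhs YW YW a b w) = mulpow l (assoc_rhs Y YW a b w))"

text \<open>tensor product vertex operator: Y(a\<otimes>b,x)(a'\<otimes>b') = Y1(a,x)a' \<otimes> Y2(b,x)b'\<close>
definition Ytens :: "('a vec \<Rightarrow> 'c vec \<Rightarrow> int \<Rightarrow> 'c vec) \<Rightarrow> ('b vec \<Rightarrow> 'd vec \<Rightarrow> int \<Rightarrow> 'd vec)
     \<Rightarrow> ('a \<times> 'b) vec \<Rightarrow> ('c \<times> 'd) vec \<Rightarrow> int \<Rightarrow> ('c \<times> 'd) vec" where
  "Ytens Y1 Y2 s t n = lmap2 (\<lambda>(a, b) (c, d).
      Sum_any (\<lambda>p::int. tens (Y1 (bas a) (bas c) p) (Y2 (bas b) (bas d) (n - p)))) s t"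

definition coalgebra :: "('h vec \<Rightarrow> ('h \<times> 'h) vec) \<Rightarrow> ('h vec \<Rightarrow> complex) \<Rightarrow> bool" where
  "coalgebra \<Delta> \<epsilon> \<longleftrightarrow> lin \<Delta> \<and> linfun \<epsilon> \<and>
     (\<forall>h. rassoc (lmap (\<lambda>(a, b). tens (\<Delta> (bas a)) (bas b)) (\<Delta> h))
          = lmap (\<lambda>(a, b). tens (bas a) (\<Delta> (bas b))) (\<Delta> h)) \<and>
     (\<forall>h. lmap (\<lambda>(a, b). sc (\<epsilon> (bas a)) (bas b)) (\<Delta> h) = h) \<and>
     (\<forall>h. lmap (\<lambda>(a, b). sc (\<epsilon> (bas b)) (bas a)) (\<Delta> h) = h)"

definition nonlocal_vertex_bialgebra :: "'h vec \<Rightarrow> ('h vec \<Rightarrow> 'h vec \<Rightarrow> int \<Rightarrow> 'h vec)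
     \<Rightarrow> ('h vec \<Rightarrow> ('h \<times> 'h) vec) \<Rightarrow> ('h vec \<Rightarrow> complex) \<Rightarrow> bool" where
  "nonlocal_vertex_bialgebra vac Y \<Delta> \<epsilon> \<longleftrightarrow>
     nonlocal_va vac Y \<and> coalgebra \<Delta> \<epsilon> \<and>
     \<epsilon> vac = 1 \<and>
     (\<forall>h h' n. \<epsilon> (Y h h' n) = (if n = 0 then \<epsilon> h * \<epsilon> h' else 0)) \<and>
     \<Delta> vac = tens vac vac \<and>
     (\<forall>h h' n. \<Delta> (Y h h' n) = Ytens Y Y (\<Delta> h) (\<Delta> h') n)"

text \<open>coefficient of x^a z^b in \<Sum> Y(Y(h1, x - z) u, z) Y(h2, x) u',
  with (x - z)^m expanded in nonnegative powers of z\<close>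
definition modalg_rhs :: "('u vec \<Rightarrow> 'u vec \<Rightarrow> int \<Rightarrow> 'u vec) \<Rightarrow> ('h vec \<Rightarrow> 'u vec \<Rightarrow> int \<Rightarrow> 'u vec)
     \<Rightarrow> ('h vec \<Rightarrow> ('h \<times> 'h) vec) \<Rightarrow> 'h vec \<Rightarrow> 'u vec \<Rightarrow> 'u vec \<Rightarrow> int \<Rightarrow> int \<Rightarrow> 'u vec" where
  "modalg_rhs YU YHU \<Delta> h u u' a b = lmap (\<lambda>(c, d).
      Sum_any (\<lambda>(m::int, k::nat). sc ((of_int m gchoose k) * (- 1) ^ k)
         (YU (YHU (bas c) u m) (YHU (bas d) u' (a - m + int k)) (b - int k)))) (\<Delta> h)"

definition module_algebra :: "'h vec \<Rightarrow> ('h vec \<Rightarrow> 'h vec \<Rightarrow> int \<Rightarrow> 'h vec)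
     \<Rightarrow> ('h vec \<Rightarrow> ('h \<times> 'h) vec) \<Rightarrow> ('h vec \<Rightarrow> complex)
     \<Rightarrow> 'u vec \<Rightarrow> ('u vec \<Rightarrow> 'u vec \<Rightarrow> int \<Rightarrow> 'u vec) \<Rightarrow> ('h vec \<Rightarrow> 'u vec \<Rightarrow> int \<Rightarrow> 'u vec) \<Rightarrow> bool" where
  "module_algebra vacH YH \<Delta> \<epsilon> vacU YU YHU \<longleftrightarrow>
     nonlocal_va vacU YU \<and> nva_module vacH YH YHU \<and>
     (\<forall>h u. fin_laurent (YHU h u)) \<and>
     (\<forall>h. YHU h vacU = delta0 (sc (\<epsilon> h) vacU)) \<and>
     (\<forall>h u u' a b. YHU h (YU u u' b) a = modalg_rhs YU YHU \<Delta> h u u' a b)"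

definition comodule_algebra :: "'h vec \<Rightarrow> ('h vec \<Rightarrow> 'h vec \<Rightarrow> int \<Rightarrow> 'h vec)
     \<Rightarrow> ('h vec \<Rightarrow> ('h \<times> 'h) vec) \<Rightarrow> ('h vec \<Rightarrow> complex)
     \<Rightarrow> 'v vec \<Rightarrow> ('v vec \<Rightarrow> 'v vec \<Rightarrow> int \<Rightarrow> 'v vec) \<Rightarrow> ('v vec \<Rightarrow> ('h \<times> 'v) vec) \<Rightarrow> bool" where
  "comodule_algebra vacH YH \<Delta> \<epsilon> vacV YV \<rho> \<longleftrightarrow>
     nonlocal_va vacV YV \<and> lin \<rho> \<and>
     (\<forall>v. lmap (\<lambda>(a, b). tens (bas a) (\<rho> (bas b))) (\<rho> v)
          = rassoc (lmap (\<lambda>(a, b). tens (\<Delta> (bas a)) (bas b)) (\<rho> v))) \<and>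
     (\<forall>v. lmap (\<lambda>(a, b). sc (\<epsilon> (bas a)) (bas b)) (\<rho> v) = v) \<and>
     \<rho> vacV = tens vacH vacV \<and>
     (\<forall>v v' n. \<rho> (YV v v' n) = Ytens YH YV (\<rho> v) (\<rho> v') n)"

definition comp2 :: "('a vec \<Rightarrow> int \<Rightarrow> int \<Rightarrow> 'b vec) \<Rightarrow> (int \<Rightarrow> int \<Rightarrow> 'a vec) \<Rightarrow> int \<Rightarrow> int \<Rightarrow> 'b vec" where
  "comp2 L F i j = Sum_any (\<lambda>(p, q). L (F p q) (i - p) (j - q))"

text \<open>an operator series in x1 / in x2, and L(x1 + x2), L(x1 - x2) expanded in nonnegative powers of x2\<close>
definition in_x1 :: "('a vec \<Rightarrow> int \<Rightarrow> 'b vec) \<Rightarrow> 'a vec \<Rightarrow> int \<Rightarrow> int \<Rightarrow> 'b vec" where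
  "in_x1 L t i j = (if j = 0 then L t i else 0)"
definition in_x2 :: "('a vec \<Rightarrow> int \<Rightarrow> 'b vec) \<Rightarrow> 'a vec \<Rightarrow> int \<Rightarrow> int \<Rightarrow> 'b vec" where
  "in_x2 L t i j = (if i = 0 then L t j else 0)"
definition at_plus :: "('a vec \<Rightarrow> int \<Rightarrow> 'b vec) \<Rightarrow> 'a vec \<Rightarrow> int \<Rightarrow> int \<Rightarrow> 'b vec" where
  "at_plus L t i j = (if 0 \<le> j then sc (of_int (i + j) gchoose nat j) (L t (i + j)) else 0)"
definition at_minus :: "('a vec \<Rightarrow> int \<Rightarrow> 'b vec) \<Rightarrow> 'a vec \<Rightarrow> int \<Rightarrow> int \<Rightarrow> 'b vec" where
  "at_minus L t i j = (if 0 \<le> j then sc ((- 1) ^ nat j * (of_int (i + j) gchoose nat j)) (L t (i + j)) else 0)"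

definition ser_x1 :: "(int \<Rightarrow> 'b vec) \<Rightarrow> int \<Rightarrow> int \<Rightarrow> 'b vec" where
  "ser_x1 F i j = (if j = 0 then F i else 0)"

definition Ylin :: "('a vec \<Rightarrow> 'b vec \<Rightarrow> int \<Rightarrow> 'c vec) \<Rightarrow> ('a \<times> 'b) vec \<Rightarrow> int \<Rightarrow> 'c vec" where
  "Ylin Y t n = lmap (\<lambda>(a, b). Y (bas a) (bas b) n) t"

definition op12 :: "(('a \<times> 'b) vec \<Rightarrow> 'i \<Rightarrow> 'd vec) \<Rightarrow> ('a \<times> ('b \<times> 'c)) vec \<Rightarrow> 'i \<Rightarrow> ('d \<times> 'c) vec" where
  "op12 L t n = lmap (\<lambda>(a, b, c). tens (L (tens (bas a) (bas b)) n) (bas c)) t"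
definition op23 :: "(('b \<times> 'c) vec \<Rightarrow> 'i \<Rightarrow> 'd vec) \<Rightarrow> ('a \<times> ('b \<times> 'c)) vec \<Rightarrow> 'i \<Rightarrow> ('a \<times> 'd) vec" where
  "op23 L t n = lmap (\<lambda>(a, b, c). tens (bas a) (L (tens (bas b) (bas c)) n)) t"
definition op12r :: "(('a \<times> 'b) vec \<Rightarrow> 'i \<Rightarrow> ('d \<times> 'e) vec) \<Rightarrow> ('a \<times> ('b \<times> 'c)) vec \<Rightarrow> 'i \<Rightarrow> ('d \<times> ('e \<times> 'c)) vec" where
  "op12r L t n = rassoc (op12 L t n)"

definition twisting_operator :: "'u vec \<Rightarrow> ('u vec \<Rightarrow> 'u vec \<Rightarrow> int \<Rightarrow> 'u vec)
     \<Rightarrow> 'v vec \<Rightarrow> ('v vec \<Rightarrow> 'v vec \<Rightarrow> int \<Rightarrow> 'v vec)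
     \<Rightarrow> (('v \<times> 'u) vec \<Rightarrow> int \<Rightarrow> ('u \<times> 'v) vec) \<Rightarrow> bool" where
  "twisting_operator vacU YU vacV YV R \<longleftrightarrow>
     linS R \<and> (\<forall>t. fin_laurent (R t)) \<and>
     (\<forall>v. R (tens v vacU) = delta0 (tens vacU v)) \<and>
     (\<forall>u. R (tens vacV u) = delta0 (tens u vacV)) \<and>
     (\<forall>v u u' i j. R (tens v (YU u u' j)) i =
        comp2 (in_x2 (op12 (Ylin YU)))
          (comp2 (in_x1 (op23 R)) (at_plus (op12r R) (tens v (tens u u')))) i j) \<and>
     (\<forall>v v' u i j. R (tens (YV v v' j) u) i =
        comp2 (in_x2 (op23 (Ylin YV)))
          (comp2 (at_minus (op12r R)) (ser_x1 (op23 R (tens v (tens v' u))))) i j)"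

definition Rsmash :: "('h vec \<Rightarrow> 'u vec \<Rightarrow> int \<Rightarrow> 'u vec) \<Rightarrow> ('v vec \<Rightarrow> ('h \<times> 'v) vec)
     \<Rightarrow> ('v \<times> 'u) vec \<Rightarrow> int \<Rightarrow> ('u \<times> 'v) vec" where
  "Rsmash YHU \<rho> t n = lmap (\<lambda>(a, b). lmap (\<lambda>(c, d).
       sc ((- 1) powi n) (tens (YHU (bas c) (bas b) n) (bas d))) (\<rho> (bas a))) t"

text \<open>Y_sharp(u\<otimes>v,x)(u'\<otimes>v') = \<Sum>i Y(u,x)Y(h_i,x)u' \<otimes> Y(v_i,x)v'\<close>
definition Ysmash :: "('u vec \<Rightarrow> 'u vec \<Rightarrow> int \<Rightarrow> 'u vec) \<Rightarrow> ('v vec \<Rightarrow> 'v vec \<Rightarrow> int \<Rightarrow> 'v vec)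
     \<Rightarrow> ('h vec \<Rightarrow> 'u vec \<Rightarrow> int \<Rightarrow> 'u vec) \<Rightarrow> ('v vec \<Rightarrow> ('h \<times> 'v) vec)
     \<Rightarrow> ('u \<times> 'v) vec \<Rightarrow> ('u \<times> 'v) vec \<Rightarrow> int \<Rightarrow> ('u \<times> 'v) vec" where
  "Ysmash YU YV YHU \<rho> s t n = lmap2 (\<lambda>(a, b) (a', b'). lmap (\<lambda>(c, d).
       Sum_any (\<lambda>(m::int, q::int). tens (YU (bas a) (YHU (bas c) (bas a') q) (m - q))
                                          (YV (bas d) (bas b') (n - m)))) (\<rho> (bas b))) s t"

text \<open>Y_R(u\<otimes>v,x)(u'\<otimes>v') = \<Sum>j f_j(-x) Y(u,x)u'_j \<otimes> Y(v_j,x)v' where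
  R(x)(v\<otimes>u') = \<Sum>j u'_j \<otimes> v_j \<otimes> f_j(x); written via the coefficients T_k of R(x)(v\<otimes>u') = \<Sum>k T_k x^k
  as \<Sum>k (-x)^k (Y(u,x) \<otimes> Y(\<cdot>,x)v')(T_k).\<close>
definition Ytwisted :: "('u vec \<Rightarrow> 'u vec \<Rightarrow> int \<Rightarrow> 'u vec) \<Rightarrow> ('v vec \<Rightarrow> 'v vec \<Rightarrow> int \<Rightarrow> 'v vec)
     \<Rightarrow> (('v \<times> 'u) vec \<Rightarrow> int \<Rightarrow> ('u \<times> 'v) vec)
     \<Rightarrow> ('u \<times> 'v) vec \<Rightarrow> ('u \<times> 'v) vec \<Rightarrow> int \<Rightarrow> ('u \<times> 'v) vec" where
  "Ytwisted YU YV R s t n = lmap2 (\<lambda>(a, b) (a', b').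
       Sum_any (\<lambda>k::int. sc ((- 1) powi k)
         (lmap (\<lambda>(c, d). Sum_any (\<lambda>m::int. tens (YU (bas a) (bas c) m) (YV (bas d) (bas b') (n - k - m))))
            (R (tens (bas b) (bas a')) k)))) s t"

end

theory Submission
  imports Defs
begin



lemma lookup_sc [simp]: "Poly_Mapping.lookup (sc c v) a = c * Poly_Mapping.lookup v a"
  unfolding sc_def by transfer (simp add: when_def)

lemma lookup_bas: "Poly_Mapping.lookup (bas a) b = (if a = b then 1 else 0)"
  unfolding bas_def by (simp add: lookup_single when_def)

lemma sc_add_right: "sc c (a + b) = sc c a + sc c b"
  by (rule poly_mapping_eqI) (simp add: lookup_add algebra_simps)
lemma sc_add_left: "sc (c + d) a = sc c a + sc d a"
  by (rule poly_mapping_eqI) (simp add: lookup_add algebra_simps)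
lemma sc_sc [simp]: "sc c (sc d a) = sc (c * d) a"
  by (rule poly_mapping_eqI) (simp add: algebra_simps)
lemma sc_one [simp]: "sc 1 a = a"
  by (rule poly_mapping_eqI) simp
lemma sc_zero_left [simp]: "sc 0 a = 0"
  by (rule poly_mapping_eqI) simp
lemma sc_zero_right [simp]: "sc c 0 = 0"
  by (rule poly_mapping_eqI) simp
lemma sc_sum: "sc c (sum f A) = (\<Sum>x\<in>A. sc c (f x))"
  by (rule poly_mapping_eqI) (simp add: lookup_sum sum_distrib_left)
lemma sc_sum_left: "sc (sum f A) v = (\<Sum>x\<in>A. sc (f x) v)"
  by (rule poly_mapping_eqI) (simp add: lookup_sum sum_distrib_right)
lemma sc_neg: "sc (- c) a = - sc c a"
  by (rule poly_mapping_eqI) simp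
lemma sc_minus_right: "sc c (- a) = - sc c a"
  by (rule poly_mapping_eqI) simp

lemma lmap_superset:
  assumes "finite S" "Poly_Mapping.keys t \<subseteq> S"
  shows "lmap f t = (\<Sum>a\<in>S. sc (Poly_Mapping.lookup t a) (f a))"
  unfolding lmap_def
  by (rule sum.mono_neutral_left) (use assms in \<open>auto simp: in_keys_iff\<close>)

lemma lmap_add: "lmap f (a + b) = lmap f a + lmap f b"
proof -
  let ?S = "Poly_Mapping.keys a \<union> Poly_Mapping.keys b"
  have "Poly_Mapping.keys (a + b) \<subseteq> ?S" by (rule keys_add)
  then show ?thesis
    by (simp add: lmap_superset[of ?S] lookup_add sc_add_left sum.distrib)
qed

lemma lmap_sc: "lmap f (sc c a) = sc c (lmap f a)"
proof -
  have "Poly_Mapping.keys (sc c a) \<subseteq> Poly_Mapping.keys a" by (auto simp: in_keys_iff)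
  then show ?thesis
    by (simp add: lmap_superset[of "Poly_Mapping.keys a"] sc_sum)
qed

lemma lmap_zero [simp]: "lmap f 0 = 0"
  by (simp add: lmap_def)

lemma lmap_bas [simp]: "lmap f (bas a) = f a"
  by (simp add: lmap_def bas_def)

lemma lmap_sum: "lmap f (sum g A) = (\<Sum>x\<in>A. lmap f (g x))"
  by (induction A rule: infinite_finite_induct) (auto simp: lmap_add)

lemma lmap_neg: "lmap f (- a) = - lmap f a"
  using lmap_sc[of f "-1" a] by (simp add: sc_neg)

lemma lmap_fun_add: "lmap (\<lambda>x. f x + g x) t = lmap f t + lmap g t"
  by (simp add: lmap_def sc_add_right sum.distrib)
lemma lmap_fun_sc: "lmap (\<lambda>x. sc c (f x)) t = sc c (lmap f t)"
  by (simp add: lmap_def sc_sum mult.commute)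
lemma lmap_fun_sc2: "lmap (\<lambda>x. sc (g x) (f x)) (sc c t) = sc c (lmap (\<lambda>x. sc (g x) (f x)) t)"
  by (rule lmap_sc)
lemma lmap_fun_zero [simp]: "lmap (\<lambda>x. 0) t = 0"
  by (simp add: lmap_def)
lemma lmap_fun_sum: "lmap (\<lambda>x. \<Sum>i\<in>A. f i x) t = (\<Sum>i\<in>A. lmap (f i) t)"
  by (induction A rule: infinite_finite_induct) (auto simp: lmap_fun_add)
lemma lmap_cong: "(\<And>x. x \<in> Poly_Mapping.keys t \<Longrightarrow> f x = g x) \<Longrightarrow> lmap f t = lmap g t"
  by (simp add: lmap_def)

lemma lmap_bas_id [simp]: "lmap bas t = t"
proof (rule poly_mapping_eqI)
  fix k
  have "Poly_Mapping.lookup (lmap bas t) k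
      = (\<Sum>a\<in>Poly_Mapping.keys t. Poly_Mapping.lookup t a * (if a = k then 1 else 0))"
    by (simp add: lmap_def lookup_sum lookup_bas)
  also have "\<dots> = Poly_Mapping.lookup t k"
    by (simp add: if_distrib[of "\<lambda>x. _ * x"] sum.delta' in_keys_iff cong: if_cong)
  finally show "Poly_Mapping.lookup (lmap bas t) k = Poly_Mapping.lookup t k" .
qed


lemma lin_lmap [simp]: "lin (lmap f)"
  by (simp add: lin_def lmap_add lmap_sc)

lemma lin_zero: "lin \<phi> \<Longrightarrow> \<phi> 0 = 0"
proof -
  assume "lin \<phi>"
  then have "\<phi> (sc 0 0) = sc 0 (\<phi> 0)" unfolding lin_def by blast
  then show ?thesis by simp
qed
lemma lin_add: "lin \<phi> \<Longrightarrow> \<phi> (a + b) = \<phi> a + \<phi> b"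
  unfolding lin_def by blast
lemma lin_sc: "lin \<phi> \<Longrightarrow> \<phi> (sc c a) = sc c (\<phi> a)"
  unfolding lin_def by blast
lemma lin_sum: "lin \<phi> \<Longrightarrow> \<phi> (sum f A) = (\<Sum>x\<in>A. \<phi> (f x))"
  by (induction A rule: infinite_finite_induct) (auto simp: lin_zero lin_add)
lemma lin_lmap_comm: "lin \<phi> \<Longrightarrow> \<phi> (lmap g t) = lmap (\<lambda>x. \<phi> (g x)) t"
  by (simp add: lmap_def lin_sum lin_sc)
lemma lin_neg: "lin \<phi> \<Longrightarrow> \<phi> (- a) = - \<phi> a"
  using lin_sc[of \<phi> "-1" a] by (simp add: sc_neg)

lemma lmap_lmap: "lmap f (lmap g t) = lmap (\<lambda>x. lmap f (g x)) t"
  by (rule lin_lmap_comm) simp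

lemma lmap_eq_self: "lin \<phi> \<Longrightarrow> \<phi> t = lmap (\<lambda>x. \<phi> (bas x)) t"
  using lin_lmap_comm[of \<phi> bas t] by simp

lemma lin_ext: "lin \<phi> \<Longrightarrow> lin \<psi> \<Longrightarrow> (\<And>x. \<phi> (bas x) = \<psi> (bas x)) \<Longrightarrow> \<phi> t = \<psi> t"
proof -
  assume a: "lin \<phi>" "lin \<psi>" "\<And>x. \<phi> (bas x) = \<psi> (bas x)"
  have "\<phi> t = lmap (\<lambda>x. \<phi> (bas x)) t" by (rule lmap_eq_self[OF a(1)])
  also have "\<dots> = lmap (\<lambda>x. \<psi> (bas x)) t" using a(3) by simp
  also have "\<dots> = \<psi> t" by (rule lmap_eq_self[OF a(2), symmetric])
  finally show ?thesis .
qed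

lemma tens_lmap: "tens u v = lmap (\<lambda>a. lmap (\<lambda>b. bas (a, b)) v) u"
  by (simp only: tens_def lmap_def sc_sum sc_sc)

lemma tens_bas_bas [simp]: "tens (bas a) (bas b) = bas (a, b)"
  by (simp add: tens_lmap)

lemma lin_tens_left: "lin (\<lambda>u. tens u v)"
  by (simp add: tens_lmap)
lemma lin_tens_right: "lin (\<lambda>v. tens u v)"
  by (simp add: tens_lmap lin_def lmap_add lmap_sc lmap_fun_add lmap_fun_sc)

lemma tens_add_left: "tens (a + b) v = tens a v + tens b v"
  using lin_tens_left lin_add by fastforce
lemma tens_add_right: "tens u (a + b) = tens u a + tens u b"
  using lin_tens_right lin_add by fastforce
lemma tens_sc_left: "tens (sc c a) v = sc c (tens a v)"
  using lin_tens_left lin_sc by fastforce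
lemma tens_sc_right: "tens u (sc c a) = sc c (tens u a)"
  using lin_tens_right lin_sc by fastforce
lemma tens_zero_left [simp]: "tens 0 v = 0"
  using lin_tens_left lin_zero by fastforce
lemma tens_zero_right [simp]: "tens u 0 = 0"
  using lin_tens_right lin_zero by fastforce
lemma tens_sum_left: "tens (sum f A) v = (\<Sum>x\<in>A. tens (f x) v)"
  using lin_tens_left lin_sum by fastforce
lemma tens_sum_right: "tens u (sum f A) = (\<Sum>x\<in>A. tens u (f x))"
  using lin_tens_right lin_sum by fastforce
lemma tens_lmap_left: "tens (lmap g t) v = lmap (\<lambda>x. tens (g x) v) t"
  using lin_tens_left lin_lmap_comm by fastforce
lemma tens_lmap_right: "tens u (lmap g t) = lmap (\<lambda>x. tens u (g x)) t"
  using lin_tens_right lin_lmap_comm by fastforce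

lemma lmap_tens: "lmap f (tens u v) = lmap (\<lambda>a. lmap (\<lambda>b. f (a, b)) v) u"
  by (simp add: tens_lmap lmap_lmap)

lemma tens_bas_left: "tens (bas a) v = lmap (\<lambda>b. bas (a, b)) v"
  by (simp add: tens_lmap)




lemma Sum_any_sup:
  assumes "finite S" "\<And>x. f x \<noteq> 0 \<Longrightarrow> x \<in> S"
  shows "Sum_any f = sum f S"
  by (rule Sum_any.expand_superset) (use assms in auto)

lemma lmap_Sum_any:
  assumes "finite S" "\<And>k x. x \<in> Poly_Mapping.keys t \<Longrightarrow> g k x \<noteq> 0 \<Longrightarrow> k \<in> S"
  shows "lmap (\<lambda>x. Sum_any (\<lambda>k. g k x)) t = Sum_any (\<lambda>k. lmap (g k) t)"
proof -
  have "lmap (\<lambda>x. Sum_any (\<lambda>k. g k x)) t = lmap (\<lambda>x. \<Sum>k\<in>S. g k x) t"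
    by (rule lmap_cong) (rule Sum_any_sup[OF assms(1)], use assms(2) in auto)
  also have "\<dots> = (\<Sum>k\<in>S. lmap (g k) t)" by (rule lmap_fun_sum)
  also have "\<dots> = Sum_any (\<lambda>k. lmap (g k) t)"
  proof (rule Sum_any_sup[symmetric, OF assms(1)])
    fix k assume "lmap (g k) t \<noteq> 0"
    then show "k \<in> S"
      using assms(2) lmap_cong[of t "g k" "\<lambda>_. 0"] by fastforce
  qed
  finally show ?thesis .
qed

lemma lin_Sum_any:
  assumes "lin \<phi>" "finite S" "\<And>k. f k \<noteq> 0 \<Longrightarrow> k \<in> S"
  shows "\<phi> (Sum_any f) = Sum_any (\<lambda>k. \<phi> (f k))"
proof -
  have "\<phi> (Sum_any f) = (\<Sum>k\<in>S. \<phi> (f k))"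
    by (simp add: Sum_any_sup[OF assms(2,3)] lin_sum[OF assms(1)])
  also have "\<dots> = Sum_any (\<lambda>k. \<phi> (f k))"
    by (rule Sum_any_sup[symmetric, OF assms(2)]) (use assms lin_zero in force)
  finally show ?thesis .
qed

lemma Sum_any_box:
  fixes g :: "'a \<Rightarrow> 'b \<Rightarrow> 'c::comm_monoid_add"
  assumes "finite A" "finite B" "\<And>a b. g a b \<noteq> 0 \<Longrightarrow> a \<in> A \<and> b \<in> B"
  shows "Sum_any (\<lambda>a. Sum_any (\<lambda>b. g a b)) = (\<Sum>a\<in>A. \<Sum>b\<in>B. g a b)"
    and "Sum_any (\<lambda>(a, b). g a b) = (\<Sum>a\<in>A. \<Sum>b\<in>B. g a b)"
proof -
  have i: "Sum_any (\<lambda>b. g a b) = (\<Sum>b\<in>B. g a b)" for a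
    by (rule Sum_any_sup) (use assms in auto)
  have "Sum_any (\<lambda>a. \<Sum>b\<in>B. g a b) = (\<Sum>a\<in>A. \<Sum>b\<in>B. g a b)"
  proof (rule Sum_any_sup[OF assms(1)])
    fix a assume "(\<Sum>b\<in>B. g a b) \<noteq> 0"
    then obtain b where "g a b \<noteq> 0" by (meson sum.neutral)
    then show "a \<in> A" using assms by blast
  qed
  then show "Sum_any (\<lambda>a. Sum_any (\<lambda>b. g a b)) = (\<Sum>a\<in>A. \<Sum>b\<in>B. g a b)" by (simp add: i)
  have "Sum_any (\<lambda>(a, b). g a b) = (\<Sum>p\<in>A\<times>B. case p of (a, b) \<Rightarrow> g a b)"
    by (rule Sum_any_sup) (use assms in auto)
  also have "\<dots> = (\<Sum>a\<in>A. \<Sum>b\<in>B. g a b)"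
    by (simp add: sum.cartesian_product)
  finally show "Sum_any (\<lambda>(a, b). g a b) = (\<Sum>a\<in>A. \<Sum>b\<in>B. g a b)" .
qed

lemma Sum_any_reindex:
  assumes "bij l"
  shows "Sum_any (\<lambda>x. g (l x)) = Sum_any g"
  using Sum_any.reindex_cong[OF assms, of g "\<lambda>x. g (l x)"] by (simp add: comp_def)

lemma lmap_Sum_any':
  assumes "\<And>x. x \<in> Poly_Mapping.keys t \<Longrightarrow> finite {k. g k x \<noteq> 0}"
  shows "lmap (\<lambda>x. Sum_any (\<lambda>k. g k x)) t = Sum_any (\<lambda>k. lmap (g k) t)"
  by (rule lmap_Sum_any[of "\<Union>x\<in>Poly_Mapping.keys t. {k. g k x \<noteq> 0}"]) (use assms in auto)

lemma lin_Sum_any':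
  assumes "lin \<phi>" "finite {k. f k \<noteq> 0}"
  shows "\<phi> (Sum_any f) = Sum_any (\<lambda>k. \<phi> (f k))"
  by (rule lin_Sum_any[OF assms(1,2)]) auto

lemma bij_shear: "bij (\<lambda>(m::int, q::int). (q, m - q))"
  by (rule bij_betw_byWitness[where f'="\<lambda>(k, m). (m + k, k)"]) auto

lemma lin_id [simp]: "lin (\<lambda>x. x)"
  by (simp add: lin_def)
lemma lin_comp: "lin f \<Longrightarrow> lin g \<Longrightarrow> lin (\<lambda>x. f (g x))"
  by (simp add: lin_def)
lemma lin_sc_fun: "lin (\<lambda>x. sc c x)"
  by (simp add: lin_def sc_add_right mult.commute)
lemma lin_sc_fun': "lin f \<Longrightarrow> lin (\<lambda>x. sc c (f x))"
  by (rule lin_comp[OF lin_sc_fun])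
lemma lin_const0 [simp]: "lin (\<lambda>x. 0)"
  by (simp add: lin_def)
lemma lin_plus: "lin f \<Longrightarrow> lin g \<Longrightarrow> lin (\<lambda>x. f x + g x)"
  by (simp add: lin_def sc_add_right algebra_simps)
lemma lin_sumf: "(\<And>i. i \<in> A \<Longrightarrow> lin (f i)) \<Longrightarrow> lin (\<lambda>x. \<Sum>i\<in>A. f i x)"
  by (induction A rule: infinite_finite_induct) (auto intro: lin_plus)
lemma lin_tens_left': "lin f \<Longrightarrow> lin (\<lambda>x. tens (f x) w)"
  by (rule lin_comp[OF lin_tens_left])
lemma lin_tens_right': "lin f \<Longrightarrow> lin (\<lambda>x. tens w (f x))"
  by (rule lin_comp[OF lin_tens_right])
lemma lin_lmap_fun: "lin f \<Longrightarrow> lin (\<lambda>x. lmap g (f x))"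
  by (rule lin_comp[OF lin_lmap])
lemma lin_lmap_arg: "(\<And>y. lin (\<lambda>x. g y x)) \<Longrightarrow> lin (\<lambda>x. lmap (\<lambda>y. g y x) t)"
  unfolding lmap_def by (rule lin_sumf) (simp add: lin_sc_fun')

lemma lin_bas_expand: "lin \<phi> \<Longrightarrow> lmap (\<lambda>b. \<phi> (bas b)) u = \<phi> u"
  by (rule lmap_eq_self[symmetric])

lemma bilin_left: "bilin Y \<Longrightarrow> lin (\<lambda>u. Y u v n)"
  by (simp add: bilin_def linS_def)
lemma bilin_right: "bilin Y \<Longrightarrow> lin (\<lambda>v. Y u v n)"
  by (simp add: bilin_def linS_def)

lemma lmap_swap: "lmap (\<lambda>x. lmap (\<lambda>y. f x y) s) t = lmap (\<lambda>y. lmap (\<lambda>x. f x y) t) s"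
  by (simp add: lmap_def sc_sum sum.swap[of _ "Poly_Mapping.keys t"] mult.commute)

lemma lmap_pair_cong:
  "(\<And>a b. f (a, b) = g (a, b)) \<Longrightarrow> lmap f t = lmap g t"
  by (metis surj_pair)

definition lb :: "(int \<Rightarrow> 'b::zero) \<Rightarrow> int \<Rightarrow> bool" where
  "lb F N \<longleftrightarrow> (\<forall>n<N. F n = 0)"

lemma laurent_lb: "laurent F \<Longrightarrow> \<exists>N. lb F N"
  by (simp add: laurent_def lb_def)

lemma lbD: "lb F N \<Longrightarrow> n < N \<Longrightarrow> F n = 0"
  by (simp add: lb_def)

lemma fin_laurent_laurent:
  assumes "fin_laurent F" shows "laurent F"
proof -
  obtain ws fs where A: "length fs = length ws" "\<forall>f\<in>set fs. laurent f"
    "\<forall>n. F n = (\<Sum>i<length ws. sc ((fs ! i) n) (ws ! i))"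
    using assms unfolding fin_laurent_def by blast
  have "\<forall>i\<in>{..<length ws}. \<exists>N. \<forall>n<N. (fs ! i) n = 0"
    using A(1,2) unfolding laurent_def by auto
  then obtain Nf where Nf: "\<forall>i\<in>{..<length ws}. \<forall>n<Nf i. (fs ! i) n = 0" by metis
  define N where "N = Min (insert (0::int) (Nf ` {..<length ws}))"
  have "\<forall>n<N. F n = 0"
  proof (intro allI impI)
    fix n assume "n < N"
    have "(fs ! i) n = 0" if "i < length ws" for i
    proof -
      have "N \<le> Nf i" unfolding N_def using that by (intro Min_le) auto
      then show ?thesis using Nf that \<open>n < N\<close> by auto
    qed
    then show "F n = 0" using A(3) by simp
  qed
  then show ?thesis unfolding laurent_def by blast
qed

lemma fin_laurent_bound:
  fixes G :: "'a vec \<Rightarrow> int \<Rightarrow> 'c vec"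
  assumes "fin_laurent F" "\<And>w. lin (\<lambda>x. G x w)" "\<And>w. \<exists>N. \<forall>m<N. G w m = 0"
  shows "\<exists>N. \<forall>n m. m < N \<longrightarrow> G (F n) m = 0"
proof -
  obtain ws fs where A: "length fs = length ws"
    "\<forall>n. F n = (\<Sum>i<length ws. sc ((fs ! i) n) (ws ! i))"
    using assms unfolding fin_laurent_def by blast
  have "\<forall>i\<in>{..<length ws}. \<exists>N. \<forall>m<N. G (ws ! i) m = 0" using assms(3) by auto
  then obtain Nf where Nf: "\<forall>i\<in>{..<length ws}. \<forall>m<Nf i. G (ws ! i) m = 0" by metis
  define N where "N = Min (insert (0::int) (Nf ` {..<length ws}))"
  have "G (F n) m = 0" if "m < N" for n m
  proof -
    have "G (F n) m = (\<Sum>i<length ws. G (sc ((fs ! i) n) (ws ! i)) m)"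
      unfolding A(2)[rule_format] by (rule lin_sum[OF assms(2)[of m]])
    also have "\<dots> = (\<Sum>i<length ws. sc ((fs ! i) n) (G (ws ! i) m))"
      using lin_sc[OF assms(2)[of m]] by simp
    also have "\<dots> = 0"
    proof (rule sum.neutral, intro ballI)
      fix i assume i: "i \<in> {..<length ws}"
      have "N \<le> Nf i" unfolding N_def using i by (intro Min_le) auto
      then show "sc ((fs ! i) n) (G (ws ! i) m) = 0" using Nf i \<open>m < N\<close> by auto
    qed
    finally show ?thesis .
  qed
  then show ?thesis by blast
qed


lemma lb_mono: "lb F N \<Longrightarrow> M \<le> N \<Longrightarrow> lb F M"
  by (simp add: lb_def)

lemma finite_conv_support:
  fixes A :: "int \<Rightarrow> 'a vec" and B :: "int \<Rightarrow> 'b vec"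
  assumes "lb A N1" "lb B N2"
  shows "finite {m. tens (A m) (B (c - m)) \<noteq> 0}"
proof (rule finite_subset[of _ "{N1..c - N2}"])
  show "{m. tens (A m) (B (c - m)) \<noteq> 0} \<subseteq> {N1..c - N2}"
  proof
    fix m assume "m \<in> {m. tens (A m) (B (c - m)) \<noteq> 0}"
    then have "A m \<noteq> 0" "B (c - m) \<noteq> 0" by auto
    then have "\<not> m < N1" "\<not> c - m < N2" using assms by (auto simp: lb_def)
    then show "m \<in> {N1..c - N2}" by auto
  qed
qed simp

locale smash =
  fixes vacH :: "'h vec" and YH :: "'h vec \<Rightarrow> 'h vec \<Rightarrow> int \<Rightarrow> 'h vec"
    and \<Delta> :: "'h vec \<Rightarrow> ('h \<times> 'h) vec" and \<epsilon> :: "'h vec \<Rightarrow> complex"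
    and vacU :: "'u vec" and YU :: "'u vec \<Rightarrow> 'u vec \<Rightarrow> int \<Rightarrow> 'u vec"
    and YHU :: "'h vec \<Rightarrow> 'u vec \<Rightarrow> int \<Rightarrow> 'u vec"
    and vacV :: "'v vec" and YV :: "'v vec \<Rightarrow> 'v vec \<Rightarrow> int \<Rightarrow> 'v vec"
    and \<rho> :: "'v vec \<Rightarrow> ('h \<times> 'v) vec"
  assumes bialg: "nonlocal_vertex_bialgebra vacH YH \<Delta> \<epsilon>"
    and modalg: "module_algebra vacH YH \<Delta> \<epsilon> vacU YU YHU"
    and comod: "comodule_algebra vacH YH \<Delta> \<epsilon> vacV YV \<rho>"
begin

abbreviation "R \<equiv> Rsmash YHU \<rho>"

lemma bilinYU: "bilin YU" and lauYU: "laurent (YU u v)"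
  using modalg unfolding module_algebra_def nonlocal_va_def by auto
lemma bilinYV: "bilin YV" and lauYV: "laurent (YV x y)"
  using comod unfolding comodule_algebra_def nonlocal_va_def by auto
lemma bilinYH: "bilin YH" and lauYH: "laurent (YH h h')"
  using bialg unfolding nonlocal_vertex_bialgebra_def nonlocal_va_def by auto
lemma bilinYHU: "bilin YHU" and lauYHU: "laurent (YHU h u)"
  using modalg unfolding module_algebra_def nva_module_def by auto
lemma finYHU: "fin_laurent (YHU h u)"
  using modalg unfolding module_algebra_def by auto
lemma YHU_vacH: "YHU vacH w = delta0 w"
  using modalg unfolding module_algebra_def nva_module_def by auto
lemma YHU_vacU: "YHU h vacU = delta0 (sc (\<epsilon> h) vacU)"
  using modalg unfolding module_algebra_def by auto
lemma modalg_id: "YHU h (YU u u' b) a = modalg_rhs YU YHU \<Delta> h u u' a b"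
  using modalg unfolding module_algebra_def by auto
lemma weak_assoc: "\<exists>l. mulpow l (assoc_lhs YHU YHU a b w) = mulpow l (assoc_rhs YH YHU a b w)"
  using modalg unfolding module_algebra_def nva_module_def by auto
lemma lin_rho: "lin \<rho>"
  and coassoc: "lmap (\<lambda>(a, b). tens (bas a) (\<rho> (bas b))) (\<rho> v)
          = rassoc (lmap (\<lambda>(a, b). tens (\<Delta> (bas a)) (bas b)) (\<rho> v))"
  and counit: "lmap (\<lambda>(a, b). sc (\<epsilon> (bas a)) (bas b)) (\<rho> v) = v"
  and rho_vac: "\<rho> vacV = tens vacH vacV"
  and rho_Y: "\<rho> (YV v v' n) = Ytens YH YV (\<rho> v) (\<rho> v') n"
  using comod unfolding comodule_algebra_def by auto
lemma lin_Delta: "lin \<Delta>"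
  using bialg unfolding nonlocal_vertex_bialgebra_def coalgebra_def by auto

lemma linYU1: "lin (\<lambda>u. YU u v n)" using bilinYU by (rule bilin_left)
lemma linYU2: "lin (\<lambda>v. YU u v n)" using bilinYU by (rule bilin_right)
lemma linYV1: "lin (\<lambda>u. YV u v n)" using bilinYV by (rule bilin_left)
lemma linYV2: "lin (\<lambda>v. YV u v n)" using bilinYV by (rule bilin_right)
lemma linYH1: "lin (\<lambda>u. YH u v n)" using bilinYH by (rule bilin_left)
lemma linYH2: "lin (\<lambda>v. YH u v n)" using bilinYH by (rule bilin_right)
lemma linYHU1: "lin (\<lambda>u. YHU u v n)" using bilinYHU by (rule bilin_left)
lemma linYHU2: "lin (\<lambda>v. YHU u v n)" using bilinYHU by (rule bilin_right)

lemma Rsmash_tens: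
  "R (tens v u) n = lmap (\<lambda>(c, d). sc ((- 1) powi n) (tens (YHU (bas c) u n) (bas d))) (\<rho> v)"
proof -
  define \<Phi> where "\<Phi> a x = lmap (\<lambda>(c, d). sc ((- 1) powi n) (tens (YHU (bas c) x n) (bas d))) (\<rho> (bas a))" for a x
  define \<Psi> where "\<Psi> y = lmap (\<lambda>(c, d). sc ((- 1) powi n) (tens (YHU (bas c) u n) (bas d))) y" for y :: "('h \<times> 'v) vec"
  have linPhi: "lin (\<Phi> a)" for a
    unfolding \<Phi>_def
    by (rule lin_lmap_arg) (auto simp: split_def intro!: lin_sc_fun' lin_tens_left' linYHU2)
  have "R (tens v u) n = lmap (\<lambda>(a, b). \<Phi> a (bas b)) (tens v u)"
    unfolding Rsmash_def \<Phi>_def by (rule lmap_pair_cong) simp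
  also have "\<dots> = lmap (\<lambda>a. lmap (\<lambda>b. \<Phi> a (bas b)) u) v"
    by (simp add: lmap_tens)
  also have "\<dots> = lmap (\<lambda>a. \<Phi> a u) v"
    by (simp add: lin_bas_expand[OF linPhi])
  also have "\<dots> = lmap (\<lambda>a. \<Psi> (\<rho> (bas a))) v"
    by (simp add: \<Phi>_def \<Psi>_def)
  also have "\<dots> = \<Psi> (lmap (\<lambda>a. \<rho> (bas a)) v)"
    by (rule lin_lmap_comm[symmetric]) (simp add: \<Psi>_def)
  also have "\<dots> = \<Psi> (\<rho> v)"
    by (simp add: lin_bas_expand[OF lin_rho])
  finally show ?thesis by (simp add: \<Psi>_def)
qed

end




lemma sign_sq: "((- 1::complex) powi k) * ((- 1) powi k) = 1"
  by (simp add: power_int_mult_distrib[symmetric])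

context smash begin

lemma YU_zero2 [simp]: "YU u 0 n = 0" using lin_zero[OF linYU2] .
lemma YU_zero1 [simp]: "YU 0 u n = 0" using lin_zero[OF linYU1] .
lemma YV_zero2 [simp]: "YV u 0 n = 0" using lin_zero[OF linYV2] .
lemma YV_zero1 [simp]: "YV 0 u n = 0" using lin_zero[OF linYV1] .
lemma YHU_zero2 [simp]: "YHU u 0 n = 0" using lin_zero[OF linYHU2] .
lemma YHU_zero1 [simp]: "YHU 0 u n = 0" using lin_zero[OF linYHU1] .
lemma YH_zero2 [simp]: "YH u 0 n = 0" using lin_zero[OF linYH2] .
lemma YH_zero1 [simp]: "YH 0 u n = 0" using lin_zero[OF linYH1] .

lemma YU_YHU_bound: "\<exists>N. \<forall>k m. m < N \<longrightarrow> YU x (YHU h w k) m = 0"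
  by (rule fin_laurent_bound[OF finYHU linYU2]) (use lauYU in \<open>auto simp: laurent_def\<close>)

lemma part2_box:
  "\<exists>A B. finite A \<and> finite B \<and> (\<forall>k m. tens (YU x (YHU h w k) m) (YV y z (n - k - m)) \<noteq> 0 \<longrightarrow> k \<in> A \<and> m \<in> B)"
proof -
  obtain Nq where Nq: "lb (YHU h w) Nq" using laurent_lb[OF lauYHU] by blast
  obtain NU where NU: "\<forall>k m. m < NU \<longrightarrow> YU x (YHU h w k) m = 0" using YU_YHU_bound by blast
  obtain NV where NV: "lb (YV y z) NV" using laurent_lb[OF lauYV] by blast
  have "k \<in> {Nq..n - NU - NV} \<and> m \<in> {NU..n - NV - Nq}"
    if "tens (YU x (YHU h w k) m) (YV y z (n - k - m)) \<noteq> 0" for k m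
  proof -
    have a: "YHU h w k \<noteq> 0" using that by (metis YU_zero2 tens_zero_left)
    have b: "YU x (YHU h w k) m \<noteq> 0" using that by (metis tens_zero_left)
    have c: "YV y z (n - k - m) \<noteq> 0" using that by (metis tens_zero_right)
    have "\<not> k < Nq" using a Nq by (auto simp: lb_def)
    moreover have "\<not> m < NU" using b NU by auto
    moreover have "\<not> n - k - m < NV" using c NV by (auto simp: lb_def)
    ultimately show ?thesis by auto
  qed
  then show ?thesis by (intro exI[of _ "{Nq..n - NU - NV}"] exI[of _ "{NU..n - NV - Nq}"]) auto
qed

lemma part2_basis:
  "lmap (\<lambda>(c, d). Sum_any (\<lambda>(m, q). tens (YU (bas a) (YHU (bas c) (bas a') q) (m - q))
                                          (YV (bas d) (bas b') (n - m)))) (\<rho> (bas b))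
 = Sum_any (\<lambda>k. sc ((- 1) powi k) (lmap (\<lambda>(c, d). Sum_any (\<lambda>m. tens (YU (bas a) (bas c) m)
      (YV (bas d) (bas b') (n - k - m)))) (R (tens (bas b) (bas a')) k)))"
proof -
  define h where "h c d k m = tens (YU (bas a) (YHU (bas c) (bas a') k) m) (YV (bas d) (bas b') (n - k - m))" for c d k m
  have step1: "lmap (\<lambda>(c, d). Sum_any (\<lambda>m. tens (YU (bas a) (bas c) m)
      (YV (bas d) (bas b') (n - k - m)))) (R (tens (bas b) (bas a')) k)
    = sc ((- 1) powi k) (lmap (\<lambda>(c, d). Sum_any (\<lambda>m. h c d k m)) (\<rho> (bas b)))" for k
  proof -
    define G where "G = (\<lambda>(c, d). Sum_any (\<lambda>m. tens (YU (bas a) (bas c) m) (YV (bas d) (bas b') (n - k - m))))"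
    have inner: "lmap G (tens X (bas d)) = Sum_any (\<lambda>m. tens (YU (bas a) X m) (YV (bas d) (bas b') (n - k - m)))" for X d
    proof -
      have "lmap G (tens X (bas d)) = lmap (\<lambda>c. Sum_any (\<lambda>m. tens (YU (bas a) (bas c) m) (YV (bas d) (bas b') (n - k - m)))) X"
        by (simp add: lmap_tens G_def)
      also have "\<dots> = Sum_any (\<lambda>m. lmap (\<lambda>c. tens (YU (bas a) (bas c) m) (YV (bas d) (bas b') (n - k - m))) X)"
      proof (rule lmap_Sum_any')
        fix c
        obtain N1 where "lb (YU (bas a) (bas c)) N1" using laurent_lb[OF lauYU] by blast
        moreover obtain N2 where "lb (YV (bas d) (bas b')) N2" using laurent_lb[OF lauYV] by blast
        ultimately have "finite {m. tens (YU (bas a) (bas c) m) (YV (bas d) (bas b') ((n - k) - m)) \<noteq> 0}"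
          by (rule finite_conv_support)
        then show "finite {m. tens (YU (bas a) (bas c) m) (YV (bas d) (bas b') (n - k - m)) \<noteq> 0}"
          by simp
      qed
      also have "\<dots> = Sum_any (\<lambda>m. tens (YU (bas a) X m) (YV (bas d) (bas b') (n - k - m)))"
        by (subst lin_bas_expand) (auto intro!: lin_tens_left' linYU2)
      finally show ?thesis .
    qed
    have "lmap G (R (tens (bas b) (bas a')) k)
      = lmap G (lmap (\<lambda>(c, d). sc ((- 1) powi k) (tens (YHU (bas c) (bas a') k) (bas d))) (\<rho> (bas b)))"
      by (simp only: Rsmash_tens)
    also have "\<dots> = lmap (\<lambda>(c, d). sc ((- 1) powi k) (lmap G (tens (YHU (bas c) (bas a') k) (bas d)))) (\<rho> (bas b))"
      by (simp add: lmap_lmap split_def lmap_sc)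
    also have "\<dots> = lmap (\<lambda>(c, d). sc ((- 1) powi k) (Sum_any (\<lambda>m. h c d k m))) (\<rho> (bas b))"
      by (simp add: inner h_def split_def)
    also have "\<dots> = sc ((- 1) powi k) (lmap (\<lambda>(c, d). Sum_any (\<lambda>m. h c d k m)) (\<rho> (bas b)))"
      by (simp add: split_def lmap_fun_sc)
    finally show ?thesis by (simp add: G_def)
  qed
  have box: "\<exists>A B. finite A \<and> finite B \<and> (\<forall>k m. h c d k m \<noteq> 0 \<longrightarrow> k \<in> A \<and> m \<in> B)" for c d
    unfolding h_def by (rule part2_box)
  have step4: "Sum_any (\<lambda>(m, q). tens (YU (bas a) (YHU (bas c) (bas a') q) (m - q)) (YV (bas d) (bas b') (n - m)))
      = Sum_any (\<lambda>k. Sum_any (\<lambda>m. h c d k m))" for c d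
  proof -
    obtain A B where AB: "finite A" "finite B" "\<And>k m. h c d k m \<noteq> 0 \<Longrightarrow> k \<in> A \<and> m \<in> B"
      using box[of c d] by blast
    have "Sum_any (\<lambda>(m, q). tens (YU (bas a) (YHU (bas c) (bas a') q) (m - q)) (YV (bas d) (bas b') (n - m)))
        = Sum_any (\<lambda>x. (\<lambda>(k, m). h c d k m) ((\<lambda>(m::int, q::int). (q, m - q)) x))"
      by (rule Sum_any.cong) (auto simp: h_def)
    also have "\<dots> = Sum_any (\<lambda>(k, m). h c d k m)"
      by (rule Sum_any_reindex[OF bij_shear])
    also have "\<dots> = (\<Sum>k\<in>A. \<Sum>m\<in>B. h c d k m)"
      by (rule Sum_any_box(2)) (use AB in auto)
    also have "\<dots> = Sum_any (\<lambda>k. Sum_any (\<lambda>m. h c d k m))"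
      by (rule Sum_any_box(1)[symmetric]) (use AB in auto)
    finally show ?thesis .
  qed
  have "Sum_any (\<lambda>k. sc ((- 1) powi k) (lmap (\<lambda>(c, d). Sum_any (\<lambda>m. tens (YU (bas a) (bas c) m)
      (YV (bas d) (bas b') (n - k - m)))) (R (tens (bas b) (bas a')) k)))
    = Sum_any (\<lambda>k. lmap (\<lambda>(c, d). Sum_any (\<lambda>m. h c d k m)) (\<rho> (bas b)))"
    by (simp del: tens_bas_bas add: step1 sign_sq)
  also have "\<dots> = lmap (\<lambda>x. Sum_any (\<lambda>k. (\<lambda>k (c, d). Sum_any (\<lambda>m. h c d k m)) k x)) (\<rho> (bas b))"
  proof (rule lmap_Sum_any'[symmetric])
    fix x :: "'h \<times> 'v"
    obtain c d where x: "x = (c, d)" by (cases x)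
    obtain A B where AB: "finite A" "finite B" "\<And>k m. h c d k m \<noteq> 0 \<Longrightarrow> k \<in> A \<and> m \<in> B"
      using box[of c d] by blast
    have "{k. Sum_any (\<lambda>m. h c d k m) \<noteq> 0} \<subseteq> A"
      using AB(3) by (auto elim: Sum_any.not_neutral_obtains_not_neutral)
    then show "finite {k. (\<lambda>k (c, d). Sum_any (\<lambda>m. h c d k m)) k x \<noteq> 0}"
      using AB(1) x by (auto intro: finite_subset)
  qed
  also have "\<dots> = lmap (\<lambda>(c, d). Sum_any (\<lambda>(m, q). tens (YU (bas a) (YHU (bas c) (bas a') q) (m - q))
                                          (YV (bas d) (bas b') (n - m)))) (\<rho> (bas b))"
    by (rule lmap_pair_cong) (simp add: step4)
  finally show ?thesis by simp
qed

lemma part2: "Ysmash YU YV YHU \<rho> = Ytwisted YU YV R"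
  unfolding Ysmash_def Ytwisted_def lmap2_def
  by (intro ext lmap_pair_cong) (simp only: prod.case part2_basis)

end



lemma fl_zero: "fin_laurent (\<lambda>n. 0)"
  unfolding fin_laurent_def by (rule exI[of _ "[]"], rule exI[of _ "[]"]) simp

lemma fl_snoc:
  assumes "fin_laurent F" "laurent f"
  shows "fin_laurent (\<lambda>n. F n + sc (f n) w)"
proof -
  obtain ws fs where A: "length fs = length ws" "\<forall>f\<in>set fs. laurent f"
    "\<forall>n. F n = (\<Sum>i<length ws. sc ((fs ! i) n) (ws ! i))"
    using assms unfolding fin_laurent_def by blast
  have "F n + sc (f n) w = (\<Sum>i<length (ws @ [w]). sc (((fs @ [f]) ! i) n) ((ws @ [w]) ! i))" for n
    using A(1) by (simp add: A(3) nth_append)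
  then show ?thesis unfolding fin_laurent_def using A assms(2)
    by (intro exI[of _ "ws @ [w]"] exI[of _ "fs @ [f]"]) auto
qed

lemma fl_add:
  assumes "fin_laurent F" "fin_laurent G"
  shows "fin_laurent (\<lambda>n. F n + G n)"
proof -
  obtain ws fs where A: "length fs = length ws" "\<forall>f\<in>set fs. laurent f"
    "\<forall>n. G n = (\<Sum>i<length ws. sc ((fs ! i) n) (ws ! i))"
    using assms(2) unfolding fin_laurent_def by blast
  have "k \<le> length ws \<Longrightarrow> fin_laurent (\<lambda>n. F n + (\<Sum>i<k. sc ((fs ! i) n) (ws ! i)))" for k
  proof (induction k)
    case 0 then show ?case using assms(1) by simp
  next
    case (Suc k)
    have "laurent (fs ! k)" using A(1,2) Suc.prems by auto
    from fl_snoc[OF Suc.IH this, of "ws ! k"] Suc.prems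
    show ?case by (simp add: add.assoc)
  qed
  from this[of "length ws"] show ?thesis by (simp add: A(3))
qed

lemma fl_lin:
  assumes "fin_laurent F" "lin \<phi>"
  shows "fin_laurent (\<lambda>n. \<phi> (F n))"
proof -
  obtain ws fs where A: "length fs = length ws" "\<forall>f\<in>set fs. laurent f"
    "\<forall>n. F n = (\<Sum>i<length ws. sc ((fs ! i) n) (ws ! i))"
    using assms unfolding fin_laurent_def by blast
  have "\<phi> (F n) = (\<Sum>i<length (map \<phi> ws). sc ((fs ! i) n) ((map \<phi> ws) ! i))" for n
    by (simp add: A(3) lin_sum[OF assms(2)] lin_sc[OF assms(2)])
  then show ?thesis unfolding fin_laurent_def using A
    by (intro exI[of _ "map \<phi> ws"] exI[of _ fs]) auto
qed

lemma fl_scal: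
  assumes "fin_laurent F"
  shows "fin_laurent (\<lambda>n. sc (g n) (F n))"
proof -
  obtain ws fs where A: "length fs = length ws" "\<forall>f\<in>set fs. laurent f"
    "\<forall>n. F n = (\<Sum>i<length ws. sc ((fs ! i) n) (ws ! i))"
    using assms unfolding fin_laurent_def by blast
  have "sc (g n) (F n) = (\<Sum>i<length ws. sc (((map (\<lambda>f n. g n * f n) fs) ! i) n) (ws ! i))" for n
    using A(1) by (simp add: A(3) sc_sum)
  moreover have "\<forall>f\<in>set (map (\<lambda>f n. g n * f n) fs). laurent f"
    using A(2) unfolding laurent_def by fastforce
  ultimately show ?thesis unfolding fin_laurent_def using A(1)
    by (intro exI[of _ ws] exI[of _ "map (\<lambda>f n. g n * f n) fs"]) auto
qed

lemma fl_sum: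
  assumes "\<And>x. x \<in> A \<Longrightarrow> fin_laurent (F x)"
  shows "fin_laurent (\<lambda>n. \<Sum>x\<in>A. F x n)"
  using assms
proof (induction A rule: infinite_finite_induct)
  case (infinite A) then show ?case by (simp add: fl_zero)
next
  case empty then show ?case by (simp add: fl_zero)
next
  case (insert x A)
  then show ?case by (simp add: fl_add)
qed

lemma fl_lmap:
  assumes "\<And>x. fin_laurent (F x)"
  shows "fin_laurent (\<lambda>n. lmap (\<lambda>x. F x n) t)"
  unfolding lmap_def
  by (rule fl_sum) (rule fl_lin[OF assms lin_sc_fun])

context smash begin

lemma linS_R: "linS R"
  unfolding linS_def Rsmash_def by simp

lemma fin_R: "fin_laurent (R t)"
  unfolding Rsmash_def
  by (intro fl_lmap) (auto simp: split_def intro!: fl_lmap fl_scal fl_lin[OF finYHU] lin_tens_left)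

lemma R_vacU: "R (tens v vacU) = delta0 (tens vacU v)"
proof (rule ext)
  fix n
  show "R (tens v vacU) n = delta0 (tens vacU v) n"
  proof (cases "n = 0")
    case True
    have "R (tens v vacU) n = lmap (\<lambda>(c, d). tens (sc (\<epsilon> (bas c)) vacU) (bas d)) (\<rho> v)"
      using True by (simp add: Rsmash_tens YHU_vacU delta0_def)
    also have "\<dots> = lmap (\<lambda>x. tens vacU ((\<lambda>(c, d). sc (\<epsilon> (bas c)) (bas d)) x)) (\<rho> v)"
      by (rule lmap_pair_cong) (simp add: tens_sc_left tens_sc_right)
    also have "\<dots> = tens vacU (lmap (\<lambda>(c, d). sc (\<epsilon> (bas c)) (bas d)) (\<rho> v))"
      by (rule tens_lmap_right[symmetric])
    also have "\<dots> = tens vacU v" by (simp add: counit)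
    finally show ?thesis using True by (simp add: delta0_def)
  next
    case False
    then show ?thesis by (simp add: Rsmash_tens YHU_vacU delta0_def split_def)
  qed
qed

lemma R_vacV: "R (tens vacV u) = delta0 (tens u vacV)"
proof (rule ext)
  fix n
  define \<phi> where "\<phi> x = sc ((- 1) powi n) (tens (YHU x u n) vacV)" for x
  have linphi: "lin \<phi>" unfolding \<phi>_def by (intro lin_sc_fun' lin_tens_left' linYHU1)
  have "R (tens vacV u) n = lmap (\<lambda>(c, d). sc ((- 1) powi n) (tens (YHU (bas c) u n) (bas d))) (tens vacH vacV)"
    by (simp only: Rsmash_tens rho_vac)
  also have "\<dots> = lmap (\<lambda>c. lmap (\<lambda>d. sc ((- 1) powi n) (tens (YHU (bas c) u n) (bas d))) vacV) vacH"
    by (simp add: lmap_tens)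
  also have "\<dots> = lmap (\<lambda>c. \<phi> (bas c)) vacH"
    by (simp add: \<phi>_def lmap_fun_sc tens_lmap_right[symmetric])
  also have "\<dots> = \<phi> vacH" by (rule lin_bas_expand[OF linphi])
  also have "\<dots> = delta0 (tens u vacV) n"
    by (simp add: \<phi>_def YHU_vacH delta0_def)
  finally show "R (tens vacV u) n = delta0 (tens u vacV) n" .
qed

end



lemma Sum_any_inj_reindex:
  assumes "inj h" "\<And>x. f x \<noteq> 0 \<Longrightarrow> x \<in> range h"
  shows "Sum_any (\<lambda>y. f (h y)) = Sum_any f"
proof -
  have eq: "{x. f x \<noteq> 0} = h ` {y. f (h y) \<noteq> 0}" using assms(2) by auto
  have inj: "inj_on h {y. f (h y) \<noteq> 0}" using assms(1) by (simp add: inj_on_def inj_def)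
  show ?thesis
  proof (cases "finite {y. f (h y) \<noteq> 0}")
    case True
    then have "finite {x. f x \<noteq> 0}" by (simp add: eq)
    have "Sum_any f = sum f (h ` {y. f (h y) \<noteq> 0})"
      by (simp add: Sum_any.expand_set eq[symmetric])
    also have "\<dots> = sum (\<lambda>y. f (h y)) {y. f (h y) \<noteq> 0}"
      by (rule sum.reindex[OF inj, unfolded comp_def])
    also have "\<dots> = Sum_any (\<lambda>y. f (h y))" by (simp add: Sum_any.expand_set)
    finally show ?thesis by simp
  next
    case False
    have "\<not> finite {x. f x \<noteq> 0}"
    proof
      assume "finite {x. f x \<noteq> 0}"
      then have "finite (h ` {y. f (h y) \<noteq> 0})" by (simp add: eq[symmetric])
      then show False using finite_imageD[OF _ inj] False by blast
    qed
    with False show ?thesis by simp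
  qed
qed

lemma comp2_in_x1: "comp2 (in_x1 L) F i j = Sum_any (\<lambda>p. L (F p j) (i - p))"
proof -
  have "comp2 (in_x1 L) F i j = Sum_any (\<lambda>(p, q). if j - q = 0 then L (F p q) (i - p) else 0)"
    unfolding comp2_def in_x1_def by (rule Sum_any.cong) auto
  also have "\<dots> = Sum_any (\<lambda>p. (\<lambda>(p, q). if j - q = 0 then L (F p q) (i - p) else 0) (p, j))"
    by (rule Sum_any_inj_reindex[symmetric]) (auto simp: inj_def split: if_splits)
  finally show ?thesis by simp
qed

lemma comp2_in_x2: "comp2 (in_x2 L) F i j = Sum_any (\<lambda>q. L (F i q) (j - q))"
proof -
  have "comp2 (in_x2 L) F i j = Sum_any (\<lambda>(p, q). if i - p = 0 then L (F p q) (j - q) else 0)"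
    unfolding comp2_def in_x2_def by (rule Sum_any.cong) auto
  also have "\<dots> = Sum_any (\<lambda>q. (\<lambda>(p, q). if i - p = 0 then L (F p q) (j - q) else 0) (i, q))"
    by (rule Sum_any_inj_reindex[symmetric]) (auto simp: inj_def split: if_splits)
  finally show ?thesis by simp
qed

lemma tens_tens_lmap: "tens A (tens B C) = lmap (\<lambda>a. lmap (\<lambda>b. lmap (\<lambda>c. bas (a, (b, c))) C) B) A"
  by (simp add: tens_lmap[of A] lmap_tens)

lemma rassoc_tens: "rassoc (tens (tens A B) C) = tens A (tens B C)"
  by (simp add: rassoc_def lmap_tens tens_tens_lmap)

lemma lin_rassoc: "lin rassoc"
  by (simp add: rassoc_def lin_def lmap_add lmap_sc)

lemma op23_tens:
  assumes "lin (\<lambda>w. L w n)"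
  shows "op23 L (tens X W) n = tens X (L W n)"
proof -
  have "op23 L (tens X W) n = lmap (\<lambda>a. lmap (\<lambda>bc. tens (bas a) (L (bas bc) n)) W) X"
    unfolding op23_def lmap_tens by (simp add: split_def)
  also have "\<dots> = lmap (\<lambda>a. tens (bas a) (L W n)) X"
    by (simp add: tens_lmap_right[symmetric] lin_bas_expand[OF assms])
  also have "\<dots> = tens X (L W n)"
    by (simp add: tens_lmap_left[symmetric])
  finally show ?thesis .
qed

lemma op12_tens:
  assumes "lin (\<lambda>w. L w n)"
  shows "op12 L (tens X (tens Y Z)) n = tens (L (tens X Y) n) Z"
proof -
  have l1: "lin (\<lambda>b. tens (L (tens (bas a) b) n) Z)" for a
    by (intro lin_tens_left' lin_comp[OF assms] lin_tens_right)
  have l2: "lin (\<lambda>x. tens (L (tens x Y) n) Z)"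
    by (intro lin_tens_left' lin_comp[OF assms] lin_tens_left)
  have "op12 L (tens X (tens Y Z)) n
      = lmap (\<lambda>a. lmap (\<lambda>b. lmap (\<lambda>c. tens (L (tens (bas a) (bas b)) n) (bas c)) Z) Y) X"
    unfolding op12_def lmap_tens by (simp del: tens_bas_bas add: split_def)
  also have "\<dots> = lmap (\<lambda>a. lmap (\<lambda>b. tens (L (tens (bas a) (bas b)) n) Z) Y) X"
    by (simp del: tens_bas_bas add: tens_lmap_right[symmetric])
  also have "\<dots> = lmap (\<lambda>a. tens (L (tens (bas a) Y) n) Z) X"
    by (simp del: tens_bas_bas add: lin_bas_expand[OF l1])
  also have "\<dots> = tens (L (tens X Y) n) Z"
    by (rule lin_bas_expand[OF l2])
  finally show ?thesis .
qed

lemma Ylin_tens: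
  assumes "bilin Y"
  shows "Ylin Y (tens X Z) n = Y X Z n"
proof -
  have "Ylin Y (tens X Z) n = lmap (\<lambda>a. lmap (\<lambda>b. Y (bas a) (bas b) n) Z) X"
    unfolding Ylin_def lmap_tens by simp
  also have "\<dots> = lmap (\<lambda>a. Y (bas a) Z n) X"
    by (simp add: lin_bas_expand[OF bilin_right[OF assms]])
  also have "\<dots> = Y X Z n"
    by (rule lin_bas_expand[OF bilin_left[OF assms]])
  finally show ?thesis .
qed

lemma lin_op12: "lin (\<lambda>t. op12 L t n)" unfolding op12_def by simp
lemma lin_op23: "lin (\<lambda>t. op23 L t n)" unfolding op23_def by simp
lemma lin_op12r: "lin (\<lambda>t. op12r L t n)" unfolding op12r_def op12_def
  by (rule lin_comp[OF lin_rassoc]) simp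
lemma lin_Ylin: "lin (\<lambda>t. Ylin Y t n)" unfolding Ylin_def by simp

context smash begin

lemma linR: "lin (\<lambda>t. R t n)"
  using linS_R by (simp add: linS_def)

lemma coassoc_apply:
  "lmap (\<lambda>(c, d). lmap (\<lambda>(e, f). G e f d) (\<Delta> (bas c))) (\<rho> v)
   = lmap (\<lambda>(c, d). lmap (\<lambda>(c', d'). G c c' d') (\<rho> (bas d))) (\<rho> v)"
proof -
  define \<Psi> where "\<Psi> = lmap (\<lambda>(a, b, c). G a b c)"
  have "\<Psi> (lmap (\<lambda>(a, b). tens (bas a) (\<rho> (bas b))) (\<rho> v))
      = lmap (\<lambda>(c, d). lmap (\<lambda>(c', d'). G c c' d') (\<rho> (bas d))) (\<rho> v)"
    unfolding \<Psi>_def lmap_lmap by (rule lmap_pair_cong) (simp add: lmap_tens split_def)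
  moreover have "\<Psi> (rassoc (lmap (\<lambda>(a, b). tens (\<Delta> (bas a)) (bas b)) (\<rho> v)))
      = lmap (\<lambda>(c, d). lmap (\<lambda>(e, f). G e f d) (\<Delta> (bas c))) (\<rho> v)"
    unfolding \<Psi>_def rassoc_def lmap_lmap
    by (rule lmap_pair_cong) (simp add: lmap_tens split_def)
  ultimately show ?thesis using coassoc[of v] by simp
qed

end



lemma fin_laurent_bound_param:
  fixes G :: "'a vec \<Rightarrow> 'k \<Rightarrow> int \<Rightarrow> 'c vec"
  assumes "fin_laurent F" "\<And>k m. lin (\<lambda>x. G x k m)" "\<And>w. \<exists>N. \<forall>k m. m < N \<longrightarrow> G w k m = 0"
  shows "\<exists>N. \<forall>n k m. m < N \<longrightarrow> G (F n) k m = 0"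
proof -
  obtain ws fs where A: "length fs = length ws"
    "\<forall>n. F n = (\<Sum>i<length ws. sc ((fs ! i) n) (ws ! i))"
    using assms unfolding fin_laurent_def by blast
  have "\<forall>i\<in>{..<length ws}. \<exists>N. \<forall>k m. m < N \<longrightarrow> G (ws ! i) k m = 0" using assms(3) by auto
  then obtain Nf where Nf: "\<forall>i\<in>{..<length ws}. \<forall>k m. m < Nf i \<longrightarrow> G (ws ! i) k m = 0" by metis
  define N where "N = Min (insert (0::int) (Nf ` {..<length ws}))"
  have "G (F n) k m = 0" if "m < N" for n k m
  proof -
    have "G (F n) k m = (\<Sum>i<length ws. G (sc ((fs ! i) n) (ws ! i)) k m)"
      unfolding A(2)[rule_format] by (rule lin_sum[OF assms(2)])
    also have "\<dots> = (\<Sum>i<length ws. sc ((fs ! i) n) (G (ws ! i) k m))"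
      using lin_sc[OF assms(2)] by simp
    also have "\<dots> = 0"
    proof (rule sum.neutral, intro ballI)
      fix i assume i: "i \<in> {..<length ws}"
      have "N \<le> Nf i" unfolding N_def using i by (intro Min_le) auto
      then show "sc ((fs ! i) n) (G (ws ! i) k m) = 0" using Nf i \<open>m < N\<close> by auto
    qed
    finally show ?thesis .
  qed
  then show ?thesis by blast
qed

lemma sign_add: "((- 1::complex) powi a) * ((- 1) powi b) = (- 1) powi (a + b)"
  by (simp add: power_int_add)

lemma sign_nat: "((- 1::complex) powi (a + int k)) = ((- 1) powi a) * (- 1) ^ k"
  by (simp add: power_int_add)

lemma lmap_supp_finite:
  assumes "\<And>y. y \<in> Poly_Mapping.keys t \<Longrightarrow> finite {p. g y p \<noteq> 0}"
  shows "finite {p. lmap (\<lambda>y. g y p) t \<noteq> 0}"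
proof (rule finite_subset[of _ "\<Union>y\<in>Poly_Mapping.keys t. {p. g y p \<noteq> 0}"])
  show "{p. lmap (\<lambda>y. g y p) t \<noteq> 0} \<subseteq> (\<Union>y\<in>Poly_Mapping.keys t. {p. g y p \<noteq> 0})"
  proof
    fix p assume "p \<in> {p. lmap (\<lambda>y. g y p) t \<noteq> 0}"
    then have "lmap (\<lambda>y. g y p) t \<noteq> lmap (\<lambda>y. 0) t" by simp
    then obtain y where "y \<in> Poly_Mapping.keys t" "g y p \<noteq> 0" using lmap_cong by metis
    then show "p \<in> (\<Union>y\<in>Poly_Mapping.keys t. {p. g y p \<noteq> 0})" by blast
  qed
qed (use assms in auto)

context smash begin

lemma YU_YHU_YHU_bound: "\<exists>N. \<forall>k m n. n < N \<longrightarrow> YU (YHU h w m) (YHU h' w' k) n = 0"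
proof -
  have b1: "\<exists>N. \<forall>m n. n < N \<longrightarrow> YU (YHU h w m) x n = 0" for x
    by (rule fin_laurent_bound[OF finYHU linYU1]) (use lauYU in \<open>auto simp: laurent_def\<close>)
  have "\<exists>N. \<forall>k m n. n < N \<longrightarrow> (\<lambda>y m n. YU (YHU h w m) y n) (YHU h' w' k) m n = 0"
    by (rule fin_laurent_bound_param[OF finYHU]) (use b1 linYU2 in auto)
  then show ?thesis by auto
qed

lemma cond1_basis:
  "sc ((- 1) powi i) (tens (Sum_any (\<lambda>(m::int, k::nat). sc ((of_int m gchoose k) * (- 1) ^ k)
       (YU (YHU (bas c) u m) (YHU (bas c') u' (i - m + int k)) (j - int k)))) (bas d'))
   = Sum_any (\<lambda>q. Sum_any (\<lambda>p. if 0 \<le> q then sc ((of_int (p + q) gchoose nat q) * ((- 1) powi (p + q)) * ((- 1) powi (i - p)))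
        (tens (YU (YHU (bas c) u (p + q)) (YHU (bas c') u' (i - p)) (j - q)) (bas d')) else 0))"
proof -
  obtain N1 where N1: "lb (YHU (bas c) u) N1" using laurent_lb[OF lauYHU] by blast
  obtain N2 where N2: "lb (YHU (bas c') u') N2" using laurent_lb[OF lauYHU] by blast
  obtain N3 where N3: "\<forall>k m n. n < N3 \<longrightarrow> YU (YHU (bas c) u m) (YHU (bas c') u' k) n = 0"
    using YU_YHU_YHU_bound by blast
  define T where "T q p = (if 0 \<le> q then sc ((of_int (p + q) gchoose nat q) * ((- 1) powi (p + q)) * ((- 1) powi (i - p)))
        (tens (YU (YHU (bas c) u (p + q)) (YHU (bas c') u' (i - p)) (j - q)) (bas d')) else 0)" for q p
  define S where "S = (\<lambda>(m::int, k::nat). sc ((of_int m gchoose k) * (- 1) ^ k)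
       (YU (YHU (bas c) u m) (YHU (bas c') u' (i - m + int k)) (j - int k)))"
  define h where "h = (\<lambda>(m::int, k::nat). (int k, m - int k))"
  have Tbox: "q \<in> {0..j - N3} \<and> p \<in> {N1 - (j - N3)..i - N2}" if "T q p \<noteq> 0" for q p
  proof -
    have q: "0 \<le> q" using that by (auto simp: T_def split: if_splits)
    have Z: "YU (YHU (bas c) u (p + q)) (YHU (bas c') u' (i - p)) (j - q) \<noteq> 0"
      using that by (auto simp: T_def split: if_splits)
    then have a: "YHU (bas c) u (p + q) \<noteq> 0" and b: "YHU (bas c') u' (i - p) \<noteq> 0" by auto
    have "\<not> j - q < N3" using Z N3 by blast
    moreover have "\<not> p + q < N1" using a N1 by (auto simp: lb_def)
    moreover have "\<not> i - p < N2" using b N2 by (auto simp: lb_def)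
    ultimately show ?thesis using q by auto
  qed
  have Sbox: "x \<in> {N1..i + j - N3 - N2} \<times> {..nat (j - N3)}" if "S x \<noteq> 0" for x
  proof -
    obtain m k where x: "x = (m, k)" by (cases x)
    have Z: "YU (YHU (bas c) u m) (YHU (bas c') u' (i - m + int k)) (j - int k) \<noteq> 0"
      using that by (auto simp: S_def x)
    then have a: "YHU (bas c) u m \<noteq> 0" and b: "YHU (bas c') u' (i - m + int k) \<noteq> 0" by auto
    have "\<not> j - int k < N3" using Z N3 by blast
    moreover have "\<not> m < N1" using a N1 by (auto simp: lb_def)
    moreover have "\<not> i - m + int k < N2" using b N2 by (auto simp: lb_def)
    ultimately show ?thesis by (auto simp: x)
  qed
  have "sc ((- 1) powi i) (tens (Sum_any S) (bas d')) = Sum_any (\<lambda>x. sc ((- 1) powi i) (tens (S x) (bas d')))"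
  proof (rule lin_Sum_any')
    show "lin (\<lambda>x. sc ((- 1) powi i) (tens x (bas d')))" by (intro lin_sc_fun' lin_tens_left)
    have "finite ({N1..i + j - N3 - N2} \<times> {..nat (j - N3)})" by simp
    then show "finite {x. S x \<noteq> 0}" by (rule finite_subset[rotated]) (use Sbox in blast)
  qed
  also have "\<dots> = Sum_any (\<lambda>x. (\<lambda>(q, p). T q p) (h x))"
  proof (rule Sum_any.cong)
    fix x :: "int \<times> nat"
    obtain m k where x: "x = (m, k)" by (cases x)
    have sg: "((- 1::complex) powi m) * ((- 1) powi (i - (m - int k))) = ((- 1) powi i) * (- 1) ^ k"
      using sign_add[of m "i - (m - int k)"] sign_nat[of i k] by simp
    have "sc ((- 1) powi i) (tens (S x) (bas d'))
      = sc ((of_int m gchoose k) * (((- 1) powi i) * (- 1) ^ k))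
          (tens (YU (YHU (bas c) u m) (YHU (bas c') u' (i - m + int k)) (j - int k)) (bas d'))"
      by (simp add: S_def x tens_sc_left mult_ac)
    also have "\<dots> = (\<lambda>(q, p). T q p) (h x)"
      by (simp add: T_def h_def x sg[symmetric] mult_ac algebra_simps)
    finally show "sc ((- 1) powi i) (tens (S x) (bas d')) = (\<lambda>(q, p). T q p) (h x)" .
  qed
  also have "\<dots> = Sum_any (\<lambda>(q, p). T q p)"
  proof (rule Sum_any_inj_reindex)
    show "inj h" by (auto simp: inj_def h_def)
    fix x :: "int \<times> int"
    obtain q p where x: "x = (q, p)" by (cases x)
    assume "(case x of (q, p) \<Rightarrow> T q p) \<noteq> 0"
    then have "0 \<le> q" by (auto simp: x T_def split: if_splits)
    then have "x = h (p + q, nat q)" by (simp add: h_def x)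
    then show "x \<in> range h" by blast
  qed
  also have "\<dots> = (\<Sum>q\<in>{0..j - N3}. \<Sum>p\<in>{N1 - (j - N3)..i - N2}. T q p)"
    by (rule Sum_any_box(2)) (use Tbox in auto)
  also have "\<dots> = Sum_any (\<lambda>q. Sum_any (\<lambda>p. T q p))"
    by (rule Sum_any_box(1)[symmetric]) (use Tbox in auto)
  finally show ?thesis by (simp add: S_def T_def)
qed


lemma op12r_R_tens3:
  "op12r R (tens v (tens u u')) n = lmap (\<lambda>(c, d). sc ((- 1) powi n) (tens (YHU (bas c) u n) (tens (bas d) u'))) (\<rho> v)"
proof -
  have "op12r R (tens v (tens u u')) n = rassoc (tens (R (tens v u) n) u')"
    by (simp add: op12r_def op12_tens[OF linR])
  also have "\<dots> = rassoc (lmap (\<lambda>(c, d). sc ((- 1) powi n) (tens (tens (YHU (bas c) u n) (bas d)) u')) (\<rho> v))"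
    by (simp only: Rsmash_tens tens_lmap_left) (simp add: split_def tens_sc_left)
  also have "\<dots> = lmap (\<lambda>(c, d). sc ((- 1) powi n) (tens (YHU (bas c) u n) (tens (bas d) u'))) (\<rho> v)"
    by (simp add: lin_lmap_comm[OF lin_rassoc] lin_sc[OF lin_rassoc] split_def rassoc_tens)
  finally show ?thesis .
qed

lemma cond1_W_fin:
  "finite {p. (if 0 \<le> q then sc (K p) (tens (YHU (bas c) u (p + q)) (tens (YHU (bas c') u' (i - p)) (bas d'))) else 0) \<noteq> 0}"
proof -
  obtain N1 where N1: "lb (YHU (bas c) u) N1" using laurent_lb[OF lauYHU] by blast
  obtain N2 where N2: "lb (YHU (bas c') u') N2" using laurent_lb[OF lauYHU] by blast
  have "p \<in> {N1 - q..i - N2}" if "(if 0 \<le> q then sc (K p) (tens (YHU (bas c) u (p + q)) (tens (YHU (bas c') u' (i - p)) (bas d'))) else 0) \<noteq> 0" for p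
  proof -
    have "YHU (bas c) u (p + q) \<noteq> 0" "YHU (bas c') u' (i - p) \<noteq> 0"
      using that by (auto split: if_splits)
    then have "\<not> p + q < N1" "\<not> i - p < N2" using N1 N2 by (auto simp: lb_def)
    then show ?thesis by auto
  qed
  then have "{p. (if 0 \<le> q then sc (K p) (tens (YHU (bas c) u (p + q)) (tens (YHU (bas c') u' (i - p)) (bas d'))) else 0) \<noteq> 0} \<subseteq> {N1 - q..i - N2}"
    by blast
  then show ?thesis by (rule finite_subset) simp
qed

lemma cond1_T_fin:
  "\<exists>Q P. finite Q \<and> finite P \<and> (\<forall>p q. (if 0 \<le> q then sc (K p q) (tens (YU (YHU (bas c) u (p + q)) (YHU (bas c') u' (i - p)) (j - q)) (bas d')) else 0) \<noteq> 0 \<longrightarrow> q \<in> Q \<and> p \<in> P)"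
proof -
  obtain N1 where N1: "lb (YHU (bas c) u) N1" using laurent_lb[OF lauYHU] by blast
  obtain N2 where N2: "lb (YHU (bas c') u') N2" using laurent_lb[OF lauYHU] by blast
  obtain N3 where N3: "\<forall>k m n. n < N3 \<longrightarrow> YU (YHU (bas c) u m) (YHU (bas c') u' k) n = 0"
    using YU_YHU_YHU_bound by blast
  have "q \<in> {0..j - N3} \<and> p \<in> {N1 - (j - N3)..i - N2}"
    if "(if 0 \<le> q then sc (K p q) (tens (YU (YHU (bas c) u (p + q)) (YHU (bas c') u' (i - p)) (j - q)) (bas d')) else 0) \<noteq> 0" for p q
  proof -
    have q: "0 \<le> q" using that by (auto split: if_splits)
    have Z: "YU (YHU (bas c) u (p + q)) (YHU (bas c') u' (i - p)) (j - q) \<noteq> 0"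
      using that by (auto split: if_splits)
    then have a: "YHU (bas c) u (p + q) \<noteq> 0" and b: "YHU (bas c') u' (i - p) \<noteq> 0" by auto
    have "\<not> j - q < N3" using Z N3 by blast
    moreover have "\<not> p + q < N1" using a N1 by (auto simp: lb_def)
    moreover have "\<not> i - p < N2" using b N2 by (auto simp: lb_def)
    ultimately show ?thesis using q by auto
  qed
  then show ?thesis by (intro exI[of _ "{0..j - N3}"] exI[of _ "{N1 - (j - N3)..i - N2}"] conjI finite_atLeastAtMost_int) blast
qed

end



context smash begin

lemma cond1:
  "R (tens v (YU u u' j)) i =
   comp2 (in_x2 (op12 (Ylin YU))) (comp2 (in_x1 (op23 R)) (at_plus (op12r R) (tens v (tens u u')))) i j"
proof -
  define t where "t = tens v (tens u u')"
  define K where "K p q = (of_int (p + q) gchoose nat q) * ((- 1::complex) powi (p + q)) * ((- 1) powi (i - p))" for p q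
  define W where "W c c' d' p q = (if 0 \<le> q then sc (K p q) (tens (YHU (bas c) u (p + q)) (tens (YHU (bas c') u' (i - p)) (bas d'))) else 0)" for c c' :: 'h and d' :: 'v and p q :: int
  define T where "T c c' d' p q = (if 0 \<le> q then sc (K p q) (tens (YU (YHU (bas c) u (p + q)) (YHU (bas c') u' (i - p)) (j - q)) (bas d')) else 0)" for c c' :: 'h and d' :: 'v and p q :: int
  have Wfin: "finite {p. W c c' d' p q \<noteq> 0}" for c c' d' q
    unfolding W_def by (rule cond1_W_fin)
  have Tfin: "\<exists>Q P. finite Q \<and> finite P \<and> (\<forall>p q. T c c' d' p q \<noteq> 0 \<longrightarrow> q \<in> Q \<and> p \<in> P)" for c c' d'
    unfolding T_def by (rule cond1_T_fin)
  have R2: "op23 R (at_plus (op12r R) t p q) (i - p)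
      = lmap (\<lambda>(c, d). lmap (\<lambda>(c', d'). W c c' d' p q) (\<rho> (bas d))) (\<rho> v)" for p q
  proof (cases "0 \<le> q")
    case False
    then show ?thesis
      by (simp add: at_plus_def W_def lin_zero[OF lin_op23] split_def)
  next
    case True
    have inner: "op23 R (sc ((- 1) powi (p + q)) (tens (YHU (bas c) u (p + q)) (tens (bas d) u'))) (i - p)
       = lmap (\<lambda>(c', d'). sc ((- 1) powi (p + q)) (sc ((- 1) powi (i - p))
            (tens (YHU (bas c) u (p + q)) (tens (YHU (bas c') u' (i - p)) (bas d'))))) (\<rho> (bas d))" for c d
      by (simp add: lin_sc[OF lin_op23] op23_tens[OF linR] Rsmash_tens tens_lmap_right
            lmap_fun_sc split_def tens_sc_right)
    have "op23 R (at_plus (op12r R) t p q) (i - p)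
      = sc (of_int (p + q) gchoose nat q) (lmap (\<lambda>(c, d). op23 R (sc ((- 1) powi (p + q)) (tens (YHU (bas c) u (p + q)) (tens (bas d) u'))) (i - p)) (\<rho> v))"
      using True by (simp add: at_plus_def t_def op12r_R_tens3 lin_sc[OF lin_op23] lin_lmap_comm[OF lin_op23] split_def)
    also have "\<dots> = lmap (\<lambda>(c, d). lmap (\<lambda>(c', d'). W c c' d' p q) (\<rho> (bas d))) (\<rho> v)"
      using True by (simp add: inner W_def K_def lmap_fun_sc split_def mult.assoc)
    finally show ?thesis .
  qed
  have R3: "Sum_any (\<lambda>p. op23 R (at_plus (op12r R) t p q) (i - p))
      = lmap (\<lambda>(c, d). lmap (\<lambda>(c', d'). Sum_any (\<lambda>p. W c c' d' p q)) (\<rho> (bas d))) (\<rho> v)" for q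
  proof -
    have "Sum_any (\<lambda>p. op23 R (at_plus (op12r R) t p q) (i - p))
      = Sum_any (\<lambda>p. lmap (\<lambda>x. (\<lambda>p (c, d). lmap (\<lambda>(c', d'). W c c' d' p q) (\<rho> (bas d))) p x) (\<rho> v))"
      by (simp add: R2)
    also have "\<dots> = lmap (\<lambda>x. Sum_any (\<lambda>p. (\<lambda>p (c, d). lmap (\<lambda>(c', d'). W c c' d' p q) (\<rho> (bas d))) p x)) (\<rho> v)"
    proof (rule lmap_Sum_any'[symmetric])
      fix x :: "'h \<times> 'v"
      obtain c d where x: "x = (c, d)" by (cases x)
      have "finite {p. lmap (\<lambda>y. (\<lambda>y p. case y of (c', d') \<Rightarrow> W c c' d' p q) y p) (\<rho> (bas d)) \<noteq> 0}"
        by (rule lmap_supp_finite) (auto simp: split_def Wfin)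
      then show "finite {p. (\<lambda>p (c, d). lmap (\<lambda>(c', d'). W c c' d' p q) (\<rho> (bas d))) p x \<noteq> 0}"
        by (simp add: x split_def)
    qed
    also have "\<dots> = lmap (\<lambda>(c, d). lmap (\<lambda>(c', d'). Sum_any (\<lambda>p. W c c' d' p q)) (\<rho> (bas d))) (\<rho> v)"
    proof (rule lmap_pair_cong)
      fix c d
      have "Sum_any (\<lambda>p. lmap (\<lambda>y. (\<lambda>p (c', d'). W c c' d' p q) p y) (\<rho> (bas d)))
          = lmap (\<lambda>y. Sum_any (\<lambda>p. (\<lambda>p (c', d'). W c c' d' p q) p y)) (\<rho> (bas d))"
        by (rule lmap_Sum_any'[symmetric]) (auto simp: split_def Wfin)
      then show "(\<lambda>x. Sum_any (\<lambda>p. (\<lambda>p (c, d). lmap (\<lambda>(c', d'). W c c' d' p q) (\<rho> (bas d))) p x)) (c, d)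
        = (\<lambda>(c, d). lmap (\<lambda>(c', d'). Sum_any (\<lambda>p. W c c' d' p q)) (\<rho> (bas d))) (c, d)"
        by (simp add: split_def)
    qed
    finally show ?thesis .
  qed
  have opT: "op12 (Ylin YU) (W c c' d' p q) (j - q) = T c c' d' p q" for c c' d' p q
    by (cases "0 \<le> q") (simp_all add: W_def T_def lin_sc[OF lin_op12] op12_tens[OF lin_Ylin]
        Ylin_tens[OF bilinYU] lin_zero[OF lin_op12])
  have R4: "op12 (Ylin YU) (lmap (\<lambda>(c, d). lmap (\<lambda>(c', d'). Sum_any (\<lambda>p. W c c' d' p q)) (\<rho> (bas d))) (\<rho> v)) (j - q)
      = lmap (\<lambda>(c, d). lmap (\<lambda>(c', d'). Sum_any (\<lambda>p. T c c' d' p q)) (\<rho> (bas d))) (\<rho> v)" for q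
  proof -
    have e: "op12 (Ylin YU) (Sum_any (\<lambda>p. W c c' d' p q)) (j - q) = Sum_any (\<lambda>p. T c c' d' p q)" for c c' d'
      by (simp add: lin_Sum_any'[OF lin_op12 Wfin] opT)
    show ?thesis
      by (simp add: lin_lmap_comm[OF lin_op12] split_def e)
  qed
  have RHS: "comp2 (in_x2 (op12 (Ylin YU))) (comp2 (in_x1 (op23 R)) (at_plus (op12r R) t)) i j
      = lmap (\<lambda>(c, d). lmap (\<lambda>(c', d'). Sum_any (\<lambda>q. Sum_any (\<lambda>p. T c c' d' p q))) (\<rho> (bas d))) (\<rho> v)"
  proof -
    have qfin: "finite {q. Sum_any (\<lambda>p. T c c' d' p q) \<noteq> 0}" for c c' d'
    proof -
      obtain Q P where QP: "finite Q" "\<forall>p q. T c c' d' p q \<noteq> 0 \<longrightarrow> q \<in> Q \<and> p \<in> P"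
        using Tfin[of c c' d'] by blast
      have "{q. Sum_any (\<lambda>p. T c c' d' p q) \<noteq> 0} \<subseteq> Q"
        using QP(2) by (auto elim: Sum_any.not_neutral_obtains_not_neutral)
      then show ?thesis using QP(1) by (rule finite_subset)
    qed
    have "comp2 (in_x2 (op12 (Ylin YU))) (comp2 (in_x1 (op23 R)) (at_plus (op12r R) t)) i j
      = Sum_any (\<lambda>q. lmap (\<lambda>x. (\<lambda>q (c, d). lmap (\<lambda>(c', d'). Sum_any (\<lambda>p. T c c' d' p q)) (\<rho> (bas d))) q x) (\<rho> v))"
      by (simp only: comp2_in_x2 comp2_in_x1 R3 R4)
    also have "\<dots> = lmap (\<lambda>x. Sum_any (\<lambda>q. (\<lambda>q (c, d). lmap (\<lambda>(c', d'). Sum_any (\<lambda>p. T c c' d' p q)) (\<rho> (bas d))) q x)) (\<rho> v)"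
    proof (rule lmap_Sum_any'[symmetric])
      fix x :: "'h \<times> 'v"
      obtain c d where x: "x = (c, d)" by (cases x)
      have "finite {q. lmap (\<lambda>y. (\<lambda>y q. case y of (c', d') \<Rightarrow> Sum_any (\<lambda>p. T c c' d' p q)) y q) (\<rho> (bas d)) \<noteq> 0}"
        by (rule lmap_supp_finite) (auto simp: split_def qfin)
      then show "finite {q. (\<lambda>q (c, d). lmap (\<lambda>(c', d'). Sum_any (\<lambda>p. T c c' d' p q)) (\<rho> (bas d))) q x \<noteq> 0}"
        by (simp add: x split_def)
    qed
    also have "\<dots> = lmap (\<lambda>(c, d). lmap (\<lambda>(c', d'). Sum_any (\<lambda>q. Sum_any (\<lambda>p. T c c' d' p q))) (\<rho> (bas d))) (\<rho> v)"
    proof (rule lmap_pair_cong)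
      fix c d
      have "Sum_any (\<lambda>q. lmap (\<lambda>y. (\<lambda>q (c', d'). Sum_any (\<lambda>p. T c c' d' p q)) q y) (\<rho> (bas d)))
          = lmap (\<lambda>y. Sum_any (\<lambda>q. (\<lambda>q (c', d'). Sum_any (\<lambda>p. T c c' d' p q)) q y)) (\<rho> (bas d))"
        by (rule lmap_Sum_any'[symmetric]) (auto simp: split_def qfin)
      then show "(\<lambda>x. Sum_any (\<lambda>q. (\<lambda>q (c, d). lmap (\<lambda>(c', d'). Sum_any (\<lambda>p. T c c' d' p q)) (\<rho> (bas d))) q x)) (c, d)
        = (\<lambda>(c, d). lmap (\<lambda>(c', d'). Sum_any (\<lambda>q. Sum_any (\<lambda>p. T c c' d' p q))) (\<rho> (bas d))) (c, d)"
        by (simp add: split_def)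
    qed
    finally show ?thesis .
  qed
  define M where "M e f = Sum_any (\<lambda>(m::int, k::nat). sc ((of_int m gchoose k) * (- 1) ^ k)
       (YU (YHU (bas e) u m) (YHU (bas f) u' (i - m + int k)) (j - int k)))" for e f
  have LHS: "R (tens v (YU u u' j)) i
      = lmap (\<lambda>(c, d). lmap (\<lambda>(c', d'). sc ((- 1) powi i) (tens (M c c') (bas d'))) (\<rho> (bas d))) (\<rho> v)"
  proof -
    have "R (tens v (YU u u' j)) i = lmap (\<lambda>(c, d). lmap (\<lambda>(e, f). (\<lambda>e f d. sc ((- 1) powi i) (tens (M e f) (bas d))) e f d) (\<Delta> (bas c))) (\<rho> v)"
      by (simp add: Rsmash_tens modalg_id modalg_rhs_def M_def tens_lmap_left lmap_fun_sc split_def)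
    also have "\<dots> = lmap (\<lambda>(c, d). lmap (\<lambda>(c', d'). (\<lambda>e f d. sc ((- 1) powi i) (tens (M e f) (bas d))) c c' d') (\<rho> (bas d))) (\<rho> v)"
      by (rule coassoc_apply)
    finally show ?thesis by simp
  qed
  have fin: "sc ((- 1) powi i) (tens (M c c') (bas d')) = Sum_any (\<lambda>q. Sum_any (\<lambda>p. T c c' d' p q))" for c c' d'
    unfolding M_def T_def K_def by (rule cond1_basis)
  show ?thesis unfolding LHS RHS[unfolded t_def] by (simp add: fin)
qed

end



lemma gb_int_nat: "0 \<le> a \<Longrightarrow> (of_int a gchoose s :: complex) = of_nat (nat a choose s)"
  by (metis binomial_gbinomial of_int_of_nat_eq int_nat_eq)

lemma gb_int_zero: "0 \<le> a \<Longrightarrow> a < int s \<Longrightarrow> (of_int a gchoose s :: complex) = 0"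
  by (simp add: gb_int_nat)

lemma gb_int_sym: "0 \<le> q \<Longrightarrow> 0 \<le> t \<Longrightarrow> (of_int (q + t) gchoose nat q :: complex) = of_int (q + t) gchoose nat t"
proof -
  assume a: "0 \<le> q" "0 \<le> t"
  have "nat (q + t) choose nat q = nat (q + t) choose nat t"
    using binomial_symmetric[of "nat q" "nat (q + t)"] a by (simp add: nat_add_distrib)
  moreover have "(of_int (q + t) gchoose nat q :: complex) = of_nat (nat (q + t) choose nat q)"
    by (rule gb_int_nat) (use a in simp)
  moreover have "(of_int (q + t) gchoose nat t :: complex) = of_nat (nat (q + t) choose nat t)"
    by (rule gb_int_nat) (use a in simp)
  ultimately show ?thesis by simp
qed

lemma gb_minus_one: "((- 1 :: complex) gchoose s) \<noteq> 0"
proof -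
  have "(of_nat s gchoose s :: complex) = 1" using binomial_gbinomial[of s s] by simp
  then show ?thesis using gbinomial_minus[of "1::complex" s] by simp
qed

section \<open>multiplication by (x0 + x2)\<close>

definition P1 :: "(int \<Rightarrow> int \<Rightarrow> 'b vec) \<Rightarrow> int \<Rightarrow> int \<Rightarrow> 'b vec" where
  "P1 E i j = E i (j - 1) + E (i - 1) j"

lemma mulpow_0 [simp]: "mulpow 0 E = E"
  by (simp add: mulpow_def fun_eq_iff)

lemma mulpow_Suc: "mulpow (Suc k) E = P1 (mulpow k E)"
proof (intro ext)
  fix i j
  define X where "X l = E (i - int l) (j - int (Suc k - l))" for l
  have c: "of_nat (Suc k choose Suc l) = (of_nat (k choose l) + of_nat (k choose Suc l) :: complex)" for l
    by simp
  have "mulpow (Suc k) E i j = (\<Sum>l\<le>Suc k. sc (of_nat (Suc k choose l)) (X l))"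
    by (simp add: mulpow_def X_def)
  also have "\<dots> = sc (of_nat (Suc k choose 0)) (X 0) + (\<Sum>l\<le>k. sc (of_nat (Suc k choose Suc l)) (X (Suc l)))"
    by (rule sum.atMost_Suc_shift)
  also have "\<dots> = X 0 + (\<Sum>l\<le>k. sc (of_nat (Suc k choose Suc l)) (X (Suc l)))"
    by (simp only: binomial_n_0 of_nat_1 sc_one)
  also have "\<dots> = X 0 + (\<Sum>l\<le>k. sc (of_nat (k choose Suc l)) (X (Suc l))) + (\<Sum>l\<le>k. sc (of_nat (k choose l)) (X (Suc l)))"
    by (simp only: c sc_add_left sum.distrib add_ac)
  also have "X 0 + (\<Sum>l\<le>k. sc (of_nat (k choose Suc l)) (X (Suc l))) = mulpow k E i (j - 1)"
  proof -
    have "mulpow k E i (j - 1) = (\<Sum>l\<le>k. sc (of_nat (k choose l)) (X l))"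
      unfolding mulpow_def X_def by (rule sum.cong) (auto simp: Suc_diff_le algebra_simps)
    also have "\<dots> = X 0 + (\<Sum>l<k. sc (of_nat (k choose Suc l)) (X (Suc l)))"
    proof (cases k)
      case 0 then show ?thesis by simp
    next
      case (Suc k')
      then show ?thesis by (simp only: sum.atMost_Suc_shift lessThan_Suc_atMost binomial_n_0 of_nat_1 sc_one)
    qed
    also have "\<dots> = X 0 + (\<Sum>l\<le>k. sc (of_nat (k choose Suc l)) (X (Suc l)))"
      by (simp add: lessThan_Suc_atMost[symmetric] binomial_eq_0)
    finally show ?thesis by simp
  qed
  also have "(\<Sum>l\<le>k. sc (of_nat (k choose l)) (X (Suc l))) = mulpow k E (i - 1) j"
    unfolding mulpow_def X_def by (rule sum.cong) (auto simp: algebra_simps)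
  finally show "mulpow (Suc k) E i j = P1 (mulpow k E) i j"
    by (simp add: P1_def add_ac)
qed

lemma mulpow_add: "mulpow (k + r) E = mulpow r (mulpow k E)"
  by (induction r) (simp_all add: mulpow_Suc)

lemma mulpow_lb:
  assumes "\<And>q j. q < N \<Longrightarrow> E q j = 0" "q < N"
  shows "mulpow k E q j = 0"
  unfolding mulpow_def using assms by (auto intro!: sum.neutral)

lemma P1_cancel:
  assumes "P1 X = P1 Y" "\<And>q j. q < N \<Longrightarrow> X q j = 0" "\<And>q j. q < N \<Longrightarrow> Y q j = 0"
  shows "X = Y"
proof -
  have "\<forall>j. X (N + int d) j = Y (N + int d) j" for d
  proof (induction d)
    case 0
    show ?case
    proof
      fix j
      have "P1 X N (j + 1) = P1 Y N (j + 1)" using assms(1) by simp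
      then have "X N j + X (N - 1) (j + 1) = Y N j + Y (N - 1) (j + 1)" by (simp add: P1_def)
      then show "X (N + int 0) j = Y (N + int 0) j" using assms(2,3)[of "N - 1"] by simp
    qed
  next
    case (Suc d)
    show ?case
    proof
      fix j
      have "P1 X (N + int (Suc d)) (j + 1) = P1 Y (N + int (Suc d)) (j + 1)" using assms(1) by simp
      then have "X (N + int (Suc d)) j + X (N + int d) (j + 1) = Y (N + int (Suc d)) j + Y (N + int d) (j + 1)"
        by (simp add: P1_def algebra_simps)
      then show "X (N + int (Suc d)) j = Y (N + int (Suc d)) j" using Suc.IH by simp
    qed
  qed
  then have "X q j = Y q j" for q j
  proof (cases "q < N")
    case True then show ?thesis using assms(2,3)[of q j] by simp
  next
    case False
    then have "q = N + int (nat (q - N))" by simp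
    then show ?thesis using \<open>\<And>d. \<forall>j. X (N + int d) j = Y (N + int d) j\<close>[of "nat (q - N)"] by metis
  qed
  then show ?thesis by (simp add: fun_eq_iff)
qed

lemma mulpow_cancel:
  assumes "mulpow k X = mulpow k Y" "\<And>q j. q < N \<Longrightarrow> X q j = 0" "\<And>q j. q < N \<Longrightarrow> Y q j = 0"
  shows "X = Y"
  using assms(1)
proof (induction k)
  case 0 then show ?case by simp
next
  case (Suc k)
  have hX: "\<And>q j. q < N \<Longrightarrow> mulpow k X q j = 0" by (rule mulpow_lb[OF assms(2)])
  have hY: "\<And>q j. q < N \<Longrightarrow> mulpow k Y q j = 0" by (rule mulpow_lb[OF assms(3)])
  have "mulpow k X = mulpow k Y"
    by (rule P1_cancel[OF _ hX hY]) (use Suc.prems in \<open>simp add: mulpow_Suc\<close>)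
  then show ?case by (rule Suc.IH)
qed


section \<open>expansions of two-variable series\<close>

definition IY :: "(int \<Rightarrow> int \<Rightarrow> 'b vec) \<Rightarrow> int \<Rightarrow> int \<Rightarrow> 'b vec" where
  "IY G q j = Sum_any (\<lambda>s::int. if 0 \<le> s then sc (of_int (q + s) gchoose nat s) (G (q + s) (j - s)) else 0)"

definition IX :: "(int \<Rightarrow> int \<Rightarrow> 'b vec) \<Rightarrow> int \<Rightarrow> int \<Rightarrow> 'b vec" where
  "IX G q j = (if 0 \<le> q then Sum_any (\<lambda>t::int. sc (of_int (q + t) gchoose nat q) (G (q + t) (j - t))) else 0)"

definition shift1 :: "(int \<Rightarrow> int \<Rightarrow> 'b vec) \<Rightarrow> int \<Rightarrow> int \<Rightarrow> 'b vec" where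
  "shift1 G n m = G (n - 1) m"

definition shG :: "nat \<Rightarrow> (int \<Rightarrow> int \<Rightarrow> 'b vec) \<Rightarrow> int \<Rightarrow> int \<Rightarrow> 'b vec" where
  "shG k G n m = G (n - int k) m"

definition lbG :: "(int \<Rightarrow> int \<Rightarrow> 'b vec) \<Rightarrow> int \<Rightarrow> int \<Rightarrow> bool" where
  "lbG G M Ny \<longleftrightarrow> (\<forall>n m. n < M \<or> m < Ny \<longrightarrow> G n m = 0)"

lemma lbG_shG: "lbG G M Ny \<Longrightarrow> lbG (shG k G) (M + int k) Ny"
  by (auto simp: lbG_def shG_def)

lemma shift1_shG: "shift1 (shG k G) = shG (Suc k) G"
  by (simp add: fun_eq_iff shift1_def shG_def algebra_simps)

lemma shG_0 [simp]: "shG 0 G = G"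
  by (simp add: fun_eq_iff shG_def)

lemma bij_minus1: "bij (\<lambda>s::int. s - 1)"
  by (rule bij_betw_byWitness[where f'="\<lambda>s. s + 1"]) auto

lemma pascal_int:
  assumes "1 \<le> s"
  shows "(of_int (a + s) gchoose nat s :: complex) = (of_int (a + s - 1) gchoose nat (s - 1)) + (of_int (a + s - 1) gchoose nat s)"
proof -
  have s: "nat s = Suc (nat (s - 1))" using assms by simp
  have "(of_int (a + s) :: complex) = of_int (a + s - 1) + 1" by simp
  then show ?thesis using gbinomial_Suc_Suc[of "of_int (a + s - 1) :: complex" "nat (s - 1)"] s by simp
qed

lemma IY_P1:
  assumes "lbG G M Ny"
  shows "P1 (IY G) = IY (shift1 G)"
proof (intro ext)
  fix q j
  define f1 where "f1 s = (if 0 \<le> s then sc (of_int (q + s) gchoose nat s) (G (q + s) (j - 1 - s)) else 0)" for s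
  define f2 where "f2 s = (if 0 \<le> s then sc (of_int (q - 1 + s) gchoose nat s) (G (q - 1 + s) (j - s)) else 0)" for s
  have G0: "G n m = 0" if "m < Ny" for n m using assms that by (auto simp: lbG_def)
  have e1: "IY G q (j - 1) = Sum_any (\<lambda>s. f1 (s - 1))"
    unfolding IY_def f1_def by (rule Sum_any_reindex[OF bij_minus1, symmetric])
  have e2: "IY G (q - 1) j = Sum_any f2" unfolding IY_def f2_def by simp
  have fin1: "finite {s. f1 (s - 1) \<noteq> 0}"
  proof (rule finite_subset[of _ "{0..j - Ny}"])
    show "{s. f1 (s - 1) \<noteq> 0} \<subseteq> {0..j - Ny}"
    proof
      fix s assume "s \<in> {s. f1 (s - 1) \<noteq> 0}"
      then have "0 \<le> s - 1" "G (q + (s - 1)) (j - 1 - (s - 1)) \<noteq> 0" by (auto simp: f1_def split: if_splits)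
      then show "s \<in> {0..j - Ny}" using G0 by force
    qed
  qed simp
  have fin2: "finite {s. f2 s \<noteq> 0}"
  proof (rule finite_subset[of _ "{0..j - Ny}"])
    show "{s. f2 s \<noteq> 0} \<subseteq> {0..j - Ny}"
    proof
      fix s assume "s \<in> {s. f2 s \<noteq> 0}"
      then have "0 \<le> s" "G (q - 1 + s) (j - s) \<noteq> 0" by (auto simp: f2_def split: if_splits)
      then show "s \<in> {0..j - Ny}" using G0 by force
    qed
  qed simp
  have "P1 (IY G) q j = Sum_any (\<lambda>s. f1 (s - 1) + f2 s)"
    by (simp add: P1_def e1 e2 Sum_any.distrib[OF fin1 fin2])
  also have "\<dots> = IY (shift1 G) q j"
    unfolding IY_def
  proof (rule Sum_any.cong)
    fix s :: int
    consider "s < 0" | "s = 0" | "1 \<le> s" by linarith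
    then show "f1 (s - 1) + f2 s = (if 0 \<le> s then sc (of_int (q + s) gchoose nat s) (shift1 G (q + s) (j - s)) else 0)"
    proof cases
      case 1 then show ?thesis by (simp add: f1_def f2_def)
    next
      case 2 then show ?thesis by (simp add: f1_def f2_def shift1_def)
    next
      case 3
      have a1: "f1 (s - 1) = sc (of_int (q + s - 1) gchoose nat (s - 1)) (G (q + s - 1) (j - s))"
        using 3 by (simp add: f1_def algebra_simps)
      have a2: "f2 s = sc (of_int (q + s - 1) gchoose nat s) (G (q + s - 1) (j - s))"
        using 3 by (simp add: f2_def algebra_simps)
      have "f1 (s - 1) + f2 s = sc ((of_int (q + s - 1) gchoose nat (s - 1)) + (of_int (q + s - 1) gchoose nat s)) (G (q + s - 1) (j - s))"
        by (simp only: a1 a2 sc_add_left)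
      also have "\<dots> = sc (of_int (q + s) gchoose nat s) (G (q + s - 1) (j - s))"
        by (simp only: pascal_int[OF 3, of q, symmetric])
      finally show ?thesis using 3 by (simp add: shift1_def)
    qed
  qed
  finally show "P1 (IY G) q j = IY (shift1 G) q j" .
qed

lemma IX_P1:
  assumes "lbG G M Ny"
  shows "P1 (IX G) = IX (shift1 G)"
proof (intro ext)
  fix q j
  define g1 where "g1 t = sc (of_int (q + t) gchoose nat q) (G (q + t) (j - 1 - t))" for t
  define g2 where "g2 t = sc (of_int (q - 1 + t) gchoose nat (q - 1)) (G (q - 1 + t) (j - t))" for t
  have G0: "G n m = 0" if "n < M \<or> m < Ny" for n m using assms that by (auto simp: lbG_def)
  have fin1: "finite {t. g1 (t - 1) \<noteq> 0}"
  proof (rule finite_subset[of _ "{M - q + 1..j - Ny}"])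
    show "{t. g1 (t - 1) \<noteq> 0} \<subseteq> {M - q + 1..j - Ny}"
    proof
      fix t assume "t \<in> {t. g1 (t - 1) \<noteq> 0}"
      then have "G (q + (t - 1)) (j - 1 - (t - 1)) \<noteq> 0" by (auto simp: g1_def)
      then show "t \<in> {M - q + 1..j - Ny}" using G0 by force
    qed
  qed simp
  have fin2: "finite {t. g2 t \<noteq> 0}"
  proof (rule finite_subset[of _ "{M - q + 1..j - Ny}"])
    show "{t. g2 t \<noteq> 0} \<subseteq> {M - q + 1..j - Ny}"
    proof
      fix t assume "t \<in> {t. g2 t \<noteq> 0}"
      then have "G (q - 1 + t) (j - t) \<noteq> 0" by (auto simp: g2_def)
      then show "t \<in> {M - q + 1..j - Ny}" using G0 by force
    qed
  qed simp
  have r: "Sum_any g1 = Sum_any (\<lambda>t. g1 (t - 1))"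
    by (rule Sum_any_reindex[OF bij_minus1, symmetric])
  have e1: "IX G q (j - 1) = (if 0 \<le> q then Sum_any (\<lambda>t. g1 (t - 1)) else 0)"
    unfolding r[symmetric] by (simp add: IX_def g1_def)
  have e2: "IX G (q - 1) j = (if 1 \<le> q then Sum_any g2 else 0)"
    unfolding IX_def g2_def by simp
  consider "q < 0" | "q = 0" | "1 \<le> q" by linarith
  then show "P1 (IX G) q j = IX (shift1 G) q j"
  proof cases
    case 1 then show ?thesis by (simp add: P1_def IX_def)
  next
    case 2
    have "P1 (IX G) q j = Sum_any (\<lambda>t. g1 (t - 1))" unfolding P1_def e1 e2 using 2 by simp
    also have "\<dots> = IX (shift1 G) q j"
      unfolding IX_def using 2 by (simp add: g1_def shift1_def algebra_simps)
    finally show ?thesis .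
  next
    case 3
    then have "P1 (IX G) q j = Sum_any (\<lambda>t. g1 (t - 1) + g2 t)"
      by (simp add: P1_def e1 e2 Sum_any.distrib[OF fin1 fin2])
    also have "\<dots> = IX (shift1 G) q j"
      unfolding IX_def if_P[OF order.trans[OF zero_le_one 3]]
    proof (rule Sum_any.cong)
      fix t
      have p: "(of_int (t + q) gchoose nat q :: complex) = (of_int (t + q - 1) gchoose nat (q - 1)) + (of_int (t + q - 1) gchoose nat q)"
        by (rule pascal_int[OF 3])
      have a1: "g1 (t - 1) = sc (of_int (t + q - 1) gchoose nat q) (G (q + t - 1) (j - t))"
        by (simp add: g1_def algebra_simps)
      have a2: "g2 t = sc (of_int (t + q - 1) gchoose nat (q - 1)) (G (q + t - 1) (j - t))"
        by (simp add: g2_def algebra_simps)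
      have "g1 (t - 1) + g2 t = sc ((of_int (t + q - 1) gchoose nat (q - 1)) + (of_int (t + q - 1) gchoose nat q)) (G (q + t - 1) (j - t))"
        by (simp only: a1 a2 sc_add_left add.commute)
      also have "\<dots> = sc (of_int (t + q) gchoose nat q) (G (q + t - 1) (j - t))"
        by (simp only: p[symmetric])
      finally show "g1 (t - 1) + g2 t = sc (of_int (q + t) gchoose nat q) (shift1 G (q + t) (j - t))"
        by (simp add: shift1_def add.commute)
    qed
    finally show ?thesis .
  qed
qed

lemma mulpow_IY: "lbG G M Ny \<Longrightarrow> mulpow k (IY G) = IY (shG k G)"
proof (induction k)
  case 0 then show ?case by simp
next
  case (Suc k)
  then show ?case
    by (simp add: mulpow_Suc IY_P1[OF lbG_shG[OF Suc.prems]] shift1_shG)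
qed

lemma mulpow_IX: "lbG G M Ny \<Longrightarrow> mulpow k (IX G) = IX (shG k G)"
proof (induction k)
  case 0 then show ?case by simp
next
  case (Suc k)
  then show ?case
    by (simp add: mulpow_Suc IX_P1[OF lbG_shG[OF Suc.prems]] shift1_shG)
qed

lemma IY_eq_IX:
  assumes "\<And>n m. n < 0 \<Longrightarrow> G n m = 0"
  shows "IY G = IX G"
proof (intro ext)
  fix q j
  show "IY G q j = IX G q j"
  proof (cases "0 \<le> q")
    case True
    show ?thesis unfolding IY_def IX_def if_P[OF True]
    proof (rule Sum_any.cong)
      fix s :: int
      show "(if 0 \<le> s then sc (of_int (q + s) gchoose nat s) (G (q + s) (j - s)) else 0)
          = sc (of_int (q + s) gchoose nat q) (G (q + s) (j - s))"
      proof (cases "0 \<le> s")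
        case True then show ?thesis using gb_int_sym[of q s] \<open>0 \<le> q\<close> by simp
      next
        case False
        show ?thesis
        proof (cases "q + s < 0")
          case True then show ?thesis using assms by simp
        next
          case False
          then have "(of_int (q + s) gchoose nat q :: complex) = 0"
            using \<open>\<not> 0 \<le> s\<close> \<open>0 \<le> q\<close> by (intro gb_int_zero) auto
          then show ?thesis using \<open>\<not> 0 \<le> s\<close> by simp
        qed
      qed
    qed
  next
    case False
    have "IY G q j = Sum_any (\<lambda>s::int. 0)"
      unfolding IY_def
    proof (rule Sum_any.cong)
      fix s :: int
      show "(if 0 \<le> s then sc (of_int (q + s) gchoose nat s) (G (q + s) (j - s)) else 0) = 0"
      proof (cases "0 \<le> s \<and> 0 \<le> q + s")
        case True
        then have "(of_int (q + s) gchoose nat s :: complex) = 0"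
          using False by (intro gb_int_zero) auto
        then show ?thesis by simp
      next
        case f: False then show ?thesis using assms by auto
      qed
    qed
    then show ?thesis using False by (simp add: IX_def)
  qed
qed




lemma sc_eq_zero: "sc c v = 0 \<Longrightarrow> c \<noteq> 0 \<Longrightarrow> v = 0"
proof -
  assume a: "sc c v = 0" "c \<noteq> 0"
  have "v = sc (inverse c * c) v" using a(2) by simp
  also have "\<dots> = sc (inverse c) (sc c v)" by simp
  finally show "v = 0" using a(1) by simp
qed

context smash begin

lemma assoc_strong:
  "YHU (YH a b q) w i = (if 0 \<le> q then Sum_any (\<lambda>p. sc (of_int (i - p + q) gchoose nat q) (YHU a (YHU b w p) (i - p + q))) else 0)"
proof -
  define F where "F n m = YHU a (YHU b w m) n" for n m
  define A where "A = assoc_rhs YH YHU a b w"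
  have "\<exists>N. \<forall>m n. n < N \<longrightarrow> YHU a (YHU b w m) n = 0"
    by (rule fin_laurent_bound[OF finYHU linYHU2]) (use lauYHU in \<open>auto simp: laurent_def\<close>)
  then obtain M where M: "\<forall>m n. n < M \<longrightarrow> YHU a (YHU b w m) n = 0" by blast
  obtain Ny where Ny: "lb (YHU b w) Ny" using laurent_lb[OF lauYHU] by blast
  obtain NA where NA: "lb (YH a b) NA" using laurent_lb[OF lauYH] by blast
  have lbF: "lbG F M Ny"
    using M Ny by (auto simp: lbG_def F_def lb_def)
  have A0: "A q' j = 0" if "q' < min NA 0" for q' j
    using NA that by (simp add: A_def assoc_rhs_def lb_def)
  have lhs: "assoc_lhs YHU YHU a b w = IY F"
  proof (intro ext)
    fix q j
    have "IY F q j = Sum_any (\<lambda>k::nat. (\<lambda>s::int. if 0 \<le> s then sc (of_int (q + s) gchoose nat s) (F (q + s) (j - s)) else 0) (int k))"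
      unfolding IY_def
    proof (rule Sum_any_inj_reindex[symmetric])
      show "inj int" by (rule inj_of_nat)
      fix x :: int
      assume "(if 0 \<le> x then sc (of_int (q + x) gchoose nat x) (F (q + x) (j - x)) else 0) \<noteq> 0"
      then have "0 \<le> x" by (auto split: if_splits)
      then have "x = int (nat x)" by simp
      then show "x \<in> range int" by blast
    qed
    then show "assoc_lhs YHU YHU a b w q j = IY F q j"
      by (simp add: assoc_lhs_def F_def)
  qed
  obtain l where l: "mulpow l (IY F) = mulpow l A"
    using weak_assoc[of a b w] by (auto simp: lhs A_def)
  have van: "IY (shG k F) q' j = 0" if "l \<le> k" "q' < min NA 0" for k q' j
  proof -
    have "mulpow k (IY F) = mulpow (k - l) (mulpow l (IY F))"
      using mulpow_add[of l "k - l"] that(1) by simp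
    also have "\<dots> = mulpow k A" using l mulpow_add[of l "k - l" A] that(1) by simp
    finally have "IY (shG k F) = mulpow k A" by (simp add: mulpow_IY[OF lbF])
    then show ?thesis using mulpow_lb[of "min NA 0" A, OF A0 that(2)] by simp
  qed
  have Fneg: "\<forall>n m. n < M + int d \<longrightarrow> n < - int l \<longrightarrow> F n m = 0" for d
  proof (induction d)
    case 0 then show ?case using M by (simp add: F_def)
  next
    case (Suc d)
    show ?case
    proof (intro allI impI)
      fix n m assume n1: "n < M + int (Suc d)" and n2: "n < - int l"
      show "F n m = 0"
      proof (cases "n < M + int d")
        case True then show ?thesis using Suc.IH n2 by blast
      next
        case False
        define k where "k = nat (- 1 - n)"
        define q where "q = min NA 0 - 1"
        define j where "j = m - q - 1"
        define s0 where "s0 = - 1 - q"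
        have k: "int k = - 1 - n" "l \<le> k" using n2 by (auto simp: k_def)
        have s0: "0 \<le> s0" by (simp add: s0_def q_def)
        have "IY (shG k F) q j = Sum_any (\<lambda>s. if s = s0 then sc ((- 1) gchoose nat s0) (F n m) else 0)"
          unfolding IY_def
        proof (rule Sum_any.cong)
          fix s
          show "(if 0 \<le> s then sc (of_int (q + s) gchoose nat s) (shG k F (q + s) (j - s)) else 0)
              = (if s = s0 then sc ((- 1) gchoose nat s0) (F n m) else 0)"
          proof (cases "0 \<le> s")
            case False then show ?thesis using s0 by auto
          next
            case True
            consider "s < s0" | "s = s0" | "s > s0" by linarith
            then show ?thesis
            proof cases
              case 1
              then have "q + s - int k < n" "q + s - int k < M + int d" "q + s - int k < - int l"
                using k False n1 n2 by (auto simp: s0_def)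
              then have "F (q + s - int k) (j - s) = 0" using Suc.IH by blast
              then show ?thesis using 1 by (simp add: shG_def)
            next
              case 2
              have e1: "q + s - int k = n" using 2 k by (simp add: s0_def)
              have e2: "j - s = m" using 2 by (simp add: s0_def j_def)
              have e0: "q + s = -1" using 2 by (simp add: s0_def)
              show ?thesis unfolding shG_def e1 e2 e0 using 2 True k(1) by simp
            next
              case 3
              then have "(of_int (q + s) gchoose nat s :: complex) = 0"
                using True by (intro gb_int_zero) (auto simp: s0_def q_def)
              then show ?thesis using 3 True by simp
            qed
          qed
        qed
        also have "\<dots> = sc ((- 1) gchoose nat s0) (F n m)" by simp
        moreover have "IY (shG k F) q j = 0" by (rule van[OF k(2)]) (simp add: q_def min_def)
        ultimately have "sc ((- 1) gchoose nat s0) (F n m) = 0" by simp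
        then show ?thesis using gb_minus_one sc_eq_zero by blast
      qed
    qed
  qed
  have F0: "shG l F n m = 0" if "n < 0" for n m
  proof -
    have "n - int l < - int l" using that by simp
    moreover have "n - int l < M + int (nat (n - int l - M) + 1)" by simp
    ultimately show ?thesis using Fneg[of "nat (n - int l - M) + 1"] by (simp add: shG_def)
  qed
  have "mulpow l A = mulpow l (IX F)"
    using l by (simp add: mulpow_IY[OF lbF] mulpow_IX[OF lbF] IY_eq_IX[OF F0])
  then have AX: "A = IX F"
    by (rule mulpow_cancel[of _ _ _ "min NA 0"]) (auto simp: A0 IX_def)
  have "YHU (YH a b q) w i = IX F q i" using AX by (simp add: A_def assoc_rhs_def fun_eq_iff)
  also have "\<dots> = (if 0 \<le> q then Sum_any (\<lambda>p. sc (of_int (i - p + q) gchoose nat q) (YHU a (YHU b w p) (i - p + q))) else 0)"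
  proof (cases "0 \<le> q")
    case True
    have bij: "bij (\<lambda>p::int. i - p)"
      by (rule bij_betw_byWitness[where f'="\<lambda>t. i - t"]) auto
    have "Sum_any (\<lambda>t. sc (of_int (q + t) gchoose nat q) (F (q + t) (i - t)))
        = Sum_any (\<lambda>p. (\<lambda>t. sc (of_int (q + t) gchoose nat q) (F (q + t) (i - t))) (i - p))"
      by (rule Sum_any_reindex[OF bij, symmetric])
    then show ?thesis using True by (simp add: IX_def F_def algebra_simps)
  next
    case False then show ?thesis by (simp add: IX_def)
  qed
  finally show ?thesis .
qed

end



lemma sign2: "0 \<le> q \<Longrightarrow> (- 1::complex) ^ nat q * ((- 1) powi p * (- 1) powi (i - p + q)) = (- 1) powi i"
proof -
  assume q: "0 \<le> q"
  have a: "(- 1::complex) ^ nat q = (- 1) powi q" using q by (simp add: power_int_def)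
  have b: "(- 1::complex) powi (2 * q) = 1"
    by (simp add: power_int_mult)
  have "(- 1::complex) powi q * ((- 1) powi p * (- 1) powi (i - p + q)) = (- 1) powi (i + 2 * q)"
    by (simp add: power_int_add[symmetric] algebra_simps)
  also have "\<dots> = (- 1) powi i" by (simp add: power_int_add b)
  finally show ?thesis by (simp add: a)
qed

lemma comp2_ser_x1:
  assumes "\<And>x y. L 0 x y = 0"
  shows "comp2 L (ser_x1 S) i q = Sum_any (\<lambda>p. L (S p) (i - p) q)"
proof -
  have "comp2 L (ser_x1 S) i q = Sum_any (\<lambda>(p, r::int). if r = 0 then L (S p) (i - p) q else 0)"
    unfolding comp2_def ser_x1_def by (rule Sum_any.cong) (auto simp: assms)
  also have "\<dots> = Sum_any (\<lambda>p. (\<lambda>(p, r::int). if r = 0 then L (S p) (i - p) q else 0) (p, 0))"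
    by (rule Sum_any_inj_reindex[symmetric]) (auto simp: inj_def split: if_splits)
  finally show ?thesis by simp
qed

context smash begin

lemma Phi_tens:
  "lmap (\<lambda>(c, d). sc z (tens (YHU (bas c) u n) (bas d))) (tens X Y) = sc z (tens (YHU X u n) Y)"
proof -
  have l1: "lin (\<lambda>y. sc z (tens (YHU (bas c) u n) y))" for c
    by (intro lin_sc_fun' lin_tens_right)
  have l2: "lin (\<lambda>x. sc z (tens (YHU x u n) Y))"
    by (intro lin_sc_fun' lin_tens_left' linYHU1)
  have "lmap (\<lambda>(c, d). sc z (tens (YHU (bas c) u n) (bas d))) (tens X Y)
      = lmap (\<lambda>c. lmap (\<lambda>d. sc z (tens (YHU (bas c) u n) (bas d))) Y) X"
    by (simp add: lmap_tens)
  also have "\<dots> = lmap (\<lambda>c. sc z (tens (YHU (bas c) u n) Y)) X"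
    by (simp add: lin_bas_expand[OF l1])
  also have "\<dots> = sc z (tens (YHU X u n) Y)"
    by (rule lin_bas_expand[OF l2])
  finally show ?thesis .
qed

lemma YHU_YHU_bound: "\<exists>M. \<forall>p n. n < M \<longrightarrow> YHU x (YHU h w p) n = 0"
  by (rule fin_laurent_bound[OF finYHU linYHU2]) (use lauYHU in \<open>auto simp: laurent_def\<close>)

lemma cond2_basis:
  "Sum_any (\<lambda>q. sc ((- 1) powi i) (tens (YHU (YH (bas a) (bas c) q) u i) (YV (bas b) (bas d) (j - q))))
   = Sum_any (\<lambda>q. Sum_any (\<lambda>p. if 0 \<le> q then sc ((- 1) powi i * (of_int (i - p + q) gchoose nat q))
        (tens (YHU (bas a) (YHU (bas c) u p) (i - p + q)) (YV (bas b) (bas d) (j - q))) else 0))"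
proof (rule Sum_any.cong)
  fix q
  obtain Nc where Nc: "lb (YHU (bas c) u) Nc" using laurent_lb[OF lauYHU] by blast
  obtain M where M: "\<forall>p n. n < M \<longrightarrow> YHU (bas a) (YHU (bas c) u p) n = 0" using YHU_YHU_bound by blast
  show "sc ((- 1) powi i) (tens (YHU (YH (bas a) (bas c) q) u i) (YV (bas b) (bas d) (j - q)))
    = Sum_any (\<lambda>p. if 0 \<le> q then sc ((- 1) powi i * (of_int (i - p + q) gchoose nat q))
        (tens (YHU (bas a) (YHU (bas c) u p) (i - p + q)) (YV (bas b) (bas d) (j - q))) else 0)"
  proof (cases "0 \<le> q")
    case False then show ?thesis by (simp add: assoc_strong)
  next
    case True
    have fin: "finite {p. sc (of_int (i - p + q) gchoose nat q) (YHU (bas a) (YHU (bas c) u p) (i - p + q)) \<noteq> 0}"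
    proof (rule finite_subset[of _ "{Nc..i + q - M}"])
      show "{p. sc (of_int (i - p + q) gchoose nat q) (YHU (bas a) (YHU (bas c) u p) (i - p + q)) \<noteq> 0} \<subseteq> {Nc..i + q - M}"
      proof
        fix p assume "p \<in> {p. sc (of_int (i - p + q) gchoose nat q) (YHU (bas a) (YHU (bas c) u p) (i - p + q)) \<noteq> 0}"
        then have z: "YHU (bas a) (YHU (bas c) u p) (i - p + q) \<noteq> 0" by auto
        then have "YHU (bas c) u p \<noteq> 0" by auto
        then have "\<not> p < Nc" using Nc by (auto simp: lb_def)
        moreover have "\<not> i - p + q < M" using z M by blast
        ultimately show "p \<in> {Nc..i + q - M}" by auto
      qed
    qed simp
    have "sc ((- 1) powi i) (tens (YHU (YH (bas a) (bas c) q) u i) (YV (bas b) (bas d) (j - q)))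
      = sc ((- 1) powi i) (tens (Sum_any (\<lambda>p. sc (of_int (i - p + q) gchoose nat q) (YHU (bas a) (YHU (bas c) u p) (i - p + q)))) (YV (bas b) (bas d) (j - q)))"
      using True by (simp add: assoc_strong)
    also have "\<dots> = Sum_any (\<lambda>p. sc ((- 1) powi i) (tens (sc (of_int (i - p + q) gchoose nat q) (YHU (bas a) (YHU (bas c) u p) (i - p + q))) (YV (bas b) (bas d) (j - q))))"
      by (rule lin_Sum_any'[OF _ fin]) (intro lin_sc_fun' lin_tens_left)
    also have "\<dots> = Sum_any (\<lambda>p. if 0 \<le> q then sc ((- 1) powi i * (of_int (i - p + q) gchoose nat q))
        (tens (YHU (bas a) (YHU (bas c) u p) (i - p + q)) (YV (bas b) (bas d) (j - q))) else 0)"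
      using True by (simp add: tens_sc_left)
    finally show ?thesis .
  qed
qed


lemma cond2:
  "R (tens (YV v v' j) u) i =
   comp2 (in_x2 (op23 (Ylin YV))) (comp2 (at_minus (op12r R)) (ser_x1 (op23 R (tens v (tens v' u))))) i j"
proof -
  define Wm where "Wm a b c d p q = (if 0 \<le> q then sc ((- 1) powi i * (of_int (i - p + q) gchoose nat q))
        (tens (YHU (bas a) (YHU (bas c) u p) (i - p + q)) (tens (bas b) (bas d))) else 0)"
    for a c :: 'h and b d :: 'v and p q :: int
  define Tm where "Tm a b c d p q = (if 0 \<le> q then sc ((- 1) powi i * (of_int (i - p + q) gchoose nat q))
        (tens (YHU (bas a) (YHU (bas c) u p) (i - p + q)) (YV (bas b) (bas d) (j - q))) else 0)"
    for a c :: 'h and b d :: 'v and p q :: int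
  define S where "S = op23 R (tens v (tens v' u))"
  have Wfin: "finite {p. Wm a b c d p q \<noteq> 0}" for a b c d q
  proof -
    obtain Nc where Nc: "lb (YHU (bas c) u) Nc" using laurent_lb[OF lauYHU] by blast
    obtain M where M: "\<forall>p n. n < M \<longrightarrow> YHU (bas a) (YHU (bas c) u p) n = 0" using YHU_YHU_bound by blast
    have "{p. Wm a b c d p q \<noteq> 0} \<subseteq> {Nc..i + q - M}"
    proof
      fix p assume "p \<in> {p. Wm a b c d p q \<noteq> 0}"
      then have z: "YHU (bas a) (YHU (bas c) u p) (i - p + q) \<noteq> 0" by (auto simp: Wm_def split: if_splits)
      then have "YHU (bas c) u p \<noteq> 0" by auto
      then have "\<not> p < Nc" using Nc by (auto simp: lb_def)
      moreover have "\<not> i - p + q < M" using z M by blast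
      ultimately show "p \<in> {Nc..i + q - M}" by auto
    qed
    then show ?thesis by (rule finite_subset) simp
  qed
  have Tbox: "\<exists>Q P. finite Q \<and> finite P \<and> (\<forall>p q. Tm a b c d p q \<noteq> 0 \<longrightarrow> q \<in> Q \<and> p \<in> P)" for a b c d
  proof -
    obtain Nc where Nc: "lb (YHU (bas c) u) Nc" using laurent_lb[OF lauYHU] by blast
    obtain M where M: "\<forall>p n. n < M \<longrightarrow> YHU (bas a) (YHU (bas c) u p) n = 0" using YHU_YHU_bound by blast
    obtain NV where NV: "lb (YV (bas b) (bas d)) NV" using laurent_lb[OF lauYV] by blast
    have "q \<in> {0..j - NV} \<and> p \<in> {Nc..i + (j - NV) - M}" if "Tm a b c d p q \<noteq> 0" for p q
    proof -
      have q: "0 \<le> q" using that by (auto simp: Tm_def split: if_splits)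
      have z: "YHU (bas a) (YHU (bas c) u p) (i - p + q) \<noteq> 0" "YV (bas b) (bas d) (j - q) \<noteq> 0"
        using that by (auto simp: Tm_def split: if_splits)
      then have "YHU (bas c) u p \<noteq> 0" by auto
      then have "\<not> p < Nc" using Nc by (auto simp: lb_def)
      moreover have "\<not> i - p + q < M" using z M by blast
      moreover have "\<not> j - q < NV" using z NV by (auto simp: lb_def)
      ultimately show ?thesis using q by auto
    qed
    then show ?thesis by (intro exI[of _ "{0..j - NV}"] exI[of _ "{Nc..i + (j - NV) - M}"] conjI finite_atLeastAtMost_int) blast
  qed
  have S1: "S p = lmap (\<lambda>(c, d). sc ((- 1) powi p) (tens v (tens (YHU (bas c) u p) (bas d)))) (\<rho> v')" for p
    by (simp add: S_def op23_tens[OF linR] Rsmash_tens tens_lmap_right split_def tens_sc_right)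
  have S2: "at_minus (op12r R) (S p) (i - p) q = lmap (\<lambda>(c, d). lmap (\<lambda>(a, b). Wm a b c d p q) (\<rho> v)) (\<rho> v')" for p q
  proof (cases "0 \<le> q")
    case False then show ?thesis by (simp add: at_minus_def Wm_def split_def)
  next
    case True
    have sg: "(- 1::complex) ^ nat q * (of_int (i - p + q) gchoose nat q) * ((- 1) powi p * (- 1) powi (i - p + q))
        = (- 1) powi i * (of_int (i - p + q) gchoose nat q)"
      using sign2[OF True, of p i] by (simp add: mult_ac)
    have "at_minus (op12r R) (S p) (i - p) q
      = sc ((- 1) ^ nat q * (of_int (i - p + q) gchoose nat q)) (op12r R (S p) (i - p + q))"
      using True by (simp add: at_minus_def)
    also have "\<dots> = lmap (\<lambda>(c, d). lmap (\<lambda>(a, b). sc ((- 1) ^ nat q * (of_int (i - p + q) gchoose nat q) * ((- 1) powi p * (- 1) powi (i - p + q)))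
        (tens (YHU (bas a) (YHU (bas c) u p) (i - p + q)) (tens (bas b) (bas d)))) (\<rho> v)) (\<rho> v')"
      by (simp add: S1 lin_lmap_comm[OF lin_op12r] lin_sc[OF lin_op12r] op12r_R_tens3 split_def lmap_fun_sc mult.assoc)
    also have "\<dots> = lmap (\<lambda>(c, d). lmap (\<lambda>(a, b). Wm a b c d p q) (\<rho> v)) (\<rho> v')"
      using True by (simp only: sg Wm_def if_True)
    finally show ?thesis .
  qed
  have S3: "comp2 (at_minus (op12r R)) (ser_x1 S) i q
      = lmap (\<lambda>(c, d). lmap (\<lambda>(a, b). Sum_any (\<lambda>p. Wm a b c d p q)) (\<rho> v)) (\<rho> v')" for q
  proof -
    have z: "at_minus (op12r R) 0 x y = 0" for x y
      by (simp add: at_minus_def lin_zero[OF lin_op12r])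
    have "comp2 (at_minus (op12r R)) (ser_x1 S) i q
      = Sum_any (\<lambda>p. lmap (\<lambda>x. (\<lambda>p (c, d). lmap (\<lambda>(a, b). Wm a b c d p q) (\<rho> v)) p x) (\<rho> v'))"
      by (simp add: comp2_ser_x1[of "at_minus (op12r R)", OF z] S2)
    also have "\<dots> = lmap (\<lambda>x. Sum_any (\<lambda>p. (\<lambda>p (c, d). lmap (\<lambda>(a, b). Wm a b c d p q) (\<rho> v)) p x)) (\<rho> v')"
    proof (rule lmap_Sum_any'[symmetric])
      fix x :: "'h \<times> 'v"
      obtain c d where x: "x = (c, d)" by (cases x)
      have "finite {p. lmap (\<lambda>y. (\<lambda>y p. case y of (a, b) \<Rightarrow> Wm a b c d p q) y p) (\<rho> v) \<noteq> 0}"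
        by (rule lmap_supp_finite) (auto simp: split_def Wfin)
      then show "finite {p. (\<lambda>p (c, d). lmap (\<lambda>(a, b). Wm a b c d p q) (\<rho> v)) p x \<noteq> 0}"
        by (simp add: x split_def)
    qed
    also have "\<dots> = lmap (\<lambda>(c, d). lmap (\<lambda>(a, b). Sum_any (\<lambda>p. Wm a b c d p q)) (\<rho> v)) (\<rho> v')"
    proof (rule lmap_pair_cong)
      fix c d
      have "Sum_any (\<lambda>p. lmap (\<lambda>y. (\<lambda>p (a, b). Wm a b c d p q) p y) (\<rho> v))
          = lmap (\<lambda>y. Sum_any (\<lambda>p. (\<lambda>p (a, b). Wm a b c d p q) p y)) (\<rho> v)"
        by (rule lmap_Sum_any'[symmetric]) (auto simp: split_def Wfin)
      then show "(\<lambda>x. Sum_any (\<lambda>p. (\<lambda>p (c, d). lmap (\<lambda>(a, b). Wm a b c d p q) (\<rho> v)) p x)) (c, d)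
        = (\<lambda>(c, d). lmap (\<lambda>(a, b). Sum_any (\<lambda>p. Wm a b c d p q)) (\<rho> v)) (c, d)"
        by (simp add: split_def)
    qed
    finally show ?thesis .
  qed
  have opT: "op23 (Ylin YV) (Wm a b c d p q) (j - q) = Tm a b c d p q" for a b c d p q
    by (cases "0 \<le> q") (simp_all add: Wm_def Tm_def lin_sc[OF lin_op23] op23_tens[OF lin_Ylin]
        Ylin_def lin_zero[OF lin_op23])
  have S4: "op23 (Ylin YV) (comp2 (at_minus (op12r R)) (ser_x1 S) i q) (j - q)
      = lmap (\<lambda>(c, d). lmap (\<lambda>(a, b). Sum_any (\<lambda>p. Tm a b c d p q)) (\<rho> v)) (\<rho> v')" for q
  proof -
    have e: "op23 (Ylin YV) (Sum_any (\<lambda>p. Wm a b c d p q)) (j - q) = Sum_any (\<lambda>p. Tm a b c d p q)" for a b c d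
      by (simp add: lin_Sum_any'[OF lin_op23 Wfin] opT)
    show ?thesis
      by (simp add: S3 lin_lmap_comm[OF lin_op23] split_def e)
  qed
  have qfin: "finite {q. Sum_any (\<lambda>p. Tm a b c d p q) \<noteq> 0}" for a b c d
  proof -
    obtain Q P where QP: "finite Q" "\<forall>p q. Tm a b c d p q \<noteq> 0 \<longrightarrow> q \<in> Q \<and> p \<in> P"
      using Tbox[of a b c d] by blast
    have "{q. Sum_any (\<lambda>p. Tm a b c d p q) \<noteq> 0} \<subseteq> Q"
      using QP(2) by (auto elim: Sum_any.not_neutral_obtains_not_neutral)
    then show ?thesis using QP(1) by (rule finite_subset)
  qed
  have RHS: "comp2 (in_x2 (op23 (Ylin YV))) (comp2 (at_minus (op12r R)) (ser_x1 S)) i j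
      = lmap (\<lambda>(c, d). lmap (\<lambda>(a, b). Sum_any (\<lambda>q. Sum_any (\<lambda>p. Tm a b c d p q))) (\<rho> v)) (\<rho> v')"
  proof -
    have "comp2 (in_x2 (op23 (Ylin YV))) (comp2 (at_minus (op12r R)) (ser_x1 S)) i j
      = Sum_any (\<lambda>q. lmap (\<lambda>x. (\<lambda>q (c, d). lmap (\<lambda>(a, b). Sum_any (\<lambda>p. Tm a b c d p q)) (\<rho> v)) q x) (\<rho> v'))"
      by (simp only: comp2_in_x2 S4)
    also have "\<dots> = lmap (\<lambda>x. Sum_any (\<lambda>q. (\<lambda>q (c, d). lmap (\<lambda>(a, b). Sum_any (\<lambda>p. Tm a b c d p q)) (\<rho> v)) q x)) (\<rho> v')"
    proof (rule lmap_Sum_any'[symmetric])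
      fix x :: "'h \<times> 'v"
      obtain c d where x: "x = (c, d)" by (cases x)
      have "finite {q. lmap (\<lambda>y. (\<lambda>y q. case y of (a, b) \<Rightarrow> Sum_any (\<lambda>p. Tm a b c d p q)) y q) (\<rho> v) \<noteq> 0}"
        by (rule lmap_supp_finite) (auto simp: split_def qfin)
      then show "finite {q. (\<lambda>q (c, d). lmap (\<lambda>(a, b). Sum_any (\<lambda>p. Tm a b c d p q)) (\<rho> v)) q x \<noteq> 0}"
        by (simp add: x split_def)
    qed
    also have "\<dots> = lmap (\<lambda>(c, d). lmap (\<lambda>(a, b). Sum_any (\<lambda>q. Sum_any (\<lambda>p. Tm a b c d p q))) (\<rho> v)) (\<rho> v')"
    proof (rule lmap_pair_cong)
      fix c d
      have "Sum_any (\<lambda>q. lmap (\<lambda>y. (\<lambda>q (a, b). Sum_any (\<lambda>p. Tm a b c d p q)) q y) (\<rho> v))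
          = lmap (\<lambda>y. Sum_any (\<lambda>q. (\<lambda>q (a, b). Sum_any (\<lambda>p. Tm a b c d p q)) q y)) (\<rho> v)"
        by (rule lmap_Sum_any'[symmetric]) (auto simp: split_def qfin)
      then show "(\<lambda>x. Sum_any (\<lambda>q. (\<lambda>q (c, d). lmap (\<lambda>(a, b). Sum_any (\<lambda>p. Tm a b c d p q)) (\<rho> v)) q x)) (c, d)
        = (\<lambda>(c, d). lmap (\<lambda>(a, b). Sum_any (\<lambda>q. Sum_any (\<lambda>p. Tm a b c d p q))) (\<rho> v)) (c, d)"
        by (simp add: split_def)
    qed
    finally show ?thesis .
  qed
  have LHS: "R (tens (YV v v' j) u) i
      = lmap (\<lambda>(a, b). lmap (\<lambda>(c, d). Sum_any (\<lambda>q. sc ((- 1) powi i) (tens (YHU (YH (bas a) (bas c) q) u i) (YV (bas b) (bas d) (j - q))))) (\<rho> v')) (\<rho> v)"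
  proof -
    define \<Phi> :: "('h \<times> 'v) vec \<Rightarrow> ('u \<times> 'v) vec" where "\<Phi> = lmap (\<lambda>(c, d). sc ((- 1) powi i) (tens (YHU (bas c) u i) (bas d)))"
    have linPhi: "lin \<Phi>" by (simp add: \<Phi>_def)
    have e: "\<Phi> (Sum_any (\<lambda>p. tens (YH (bas a) (bas c) p) (YV (bas b) (bas d) (j - p))))
        = Sum_any (\<lambda>q. sc ((- 1) powi i) (tens (YHU (YH (bas a) (bas c) q) u i) (YV (bas b) (bas d) (j - q))))" for a b c d
    proof -
      obtain N1 where "lb (YH (bas a) (bas c)) N1" using laurent_lb[OF lauYH] by blast
      moreover obtain N2 where "lb (YV (bas b) (bas d)) N2" using laurent_lb[OF lauYV] by blast
      ultimately have fin: "finite {p. tens (YH (bas a) (bas c) p) (YV (bas b) (bas d) (j - p)) \<noteq> 0}"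
        by (rule finite_conv_support)
      show ?thesis unfolding lin_Sum_any'[OF linPhi fin] by (simp add: \<Phi>_def Phi_tens)
    qed
    have "R (tens (YV v v' j) u) i = \<Phi> (\<rho> (YV v v' j))"
      by (simp add: Rsmash_tens \<Phi>_def)
    also have "\<dots> = lmap (\<lambda>(a, b). lmap (\<lambda>(c, d). \<Phi> (Sum_any (\<lambda>p. tens (YH (bas a) (bas c) p) (YV (bas b) (bas d) (j - p))))) (\<rho> v')) (\<rho> v)"
      by (simp add: rho_Y Ytens_def lmap2_def lin_lmap_comm[OF linPhi] split_def)
    finally show ?thesis by (simp add: e)
  qed
  have "R (tens (YV v v' j) u) i = lmap (\<lambda>(a, b). lmap (\<lambda>(c, d). Sum_any (\<lambda>q. Sum_any (\<lambda>p. Tm a b c d p q))) (\<rho> v')) (\<rho> v)"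
    unfolding LHS Tm_def by (simp only: cond2_basis)
  also have "\<dots> = lmap (\<lambda>(c, d). lmap (\<lambda>(a, b). Sum_any (\<lambda>q. Sum_any (\<lambda>p. Tm a b c d p q))) (\<rho> v)) (\<rho> v')"
    by (simp add: split_def lmap_swap[of _ "\<rho> v'" "\<rho> v"])
  finally show ?thesis using RHS by (simp add: S_def)
qed

end


theorem proposition4p4:
  fixes vacH :: "'h vec" and YH :: "'h vec \<Rightarrow> 'h vec \<Rightarrow> int \<Rightarrow> 'h vec"
    and \<Delta> :: "'h vec \<Rightarrow> ('h \<times> 'h) vec" and \<epsilon> :: "'h vec \<Rightarrow> complex"
    and vacU :: "'u vec" and YU :: "'u vec \<Rightarrow> 'u vec \<Rightarrow> int \<Rightarrow> 'u vec"
    and YHU :: "'h vec \<Rightarrow> 'u vec \<Rightarrow> int \<Rightarrow> 'u vec"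
    and vacV :: "'v vec" and YV :: "'v vec \<Rightarrow> 'v vec \<Rightarrow> int \<Rightarrow> 'v vec"
    and \<rho> :: "'v vec \<Rightarrow> ('h \<times> 'v) vec"
  assumes "nonlocal_vertex_bialgebra vacH YH \<Delta> \<epsilon>"
    and "module_algebra vacH YH \<Delta> \<epsilon> vacU YU YHU"
    and "comodule_algebra vacH YH \<Delta> \<epsilon> vacV YV \<rho>"
  shows "twisting_operator vacU YU vacV YV (Rsmash YHU \<rho>)
         \<and> Ysmash YU YV YHU \<rho> = Ytwisted YU YV (Rsmash YHU \<rho>)"
proof -
  interpret smash vacH YH \<Delta> \<epsilon> vacU YU YHU vacV YV \<rho>
    using assms by unfold_locales
  have tw: "twisting_operator vacU YU vacV YV (Rsmash YHU \<rho>)"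
    unfolding twisting_operator_def
    using linS_R fin_R R_vacU R_vacV cond1 cond2 by blast
  show ?thesis using tw part2 by blast
qed

end
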